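(* Let $n_x,n_\beta\ge 1$, $A\in\mathbb{R}^{n_x\times n_x}$, $u\in\mathbb{R}^{n_x}$, $L\in\mathbb{R}^{n_x\times n_\beta}$, $Q_\beta\in\mathbb{R}^{n_\beta\times n_\beta}$ a diffusion (covariance) matrix, $\overline{x}_a\in\mathbb{R}^{n_x}$, $P_a\in\mathbb{R}^{n_x\times n_x}$ a covariance matrix, $\mu>0$ and $\Delta t_k>0$. For $t\ge 0$ define $$m(t)=\exp(At)\overline{x}_a+\int_0^t\exp(A\tau)\,d\tau\, u,\qquad C(t)=\exp(At)P_a\exp(A^Tt)+\int_0^t \exp(A\tau)LQ_\beta L^T\exp(A^T\tau)\,d\tau .$$ Let $T$ be a random time lag with density $p_k(t)=\frac{\mu}{1-e^{-\mu\Delta t_k}}e^{-\mu t}\chi_{[0,\Delta t_k)}(t)$, and consider the single-target birth density $p_k(x)=\int_0^{\Delta t_k}\mathcal{N}(x;m(t),C(t))p_k(t)\,dt$ (a mixture whose conditional mean and covariance given lag $t$ are $\mathrm{E}[x_k|t]=m(t)$ and $\mathrm{C}[x_k|t]=C(t)$). Then the mean of $p_k$ is $$\overline{x}_{b,k}=\mathrm{E}[m(T)]=\overline{x}_{b,k,1}+\overline{x}_{b,k,2},$$ where, with $I$ the $n_x\times n_x$ identity and $0_{m,n}$ the $m\times n$ zero matrix, $$\overline{x}_{b,k,1}=\frac{\mu}{1-e^{-\mu\Delta t_k}}\begin{bmatrix}I & 0_{n_x,1}\end{bmatrix}\exp(\overline{A}_b\Delta t_k)\begin{bmatrix}0_{n_x,1}\\1\end{bmatrix},\quad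 \overline{x}_{b,k,2}=\frac{\mu}{1-e^{-\mu\Delta t_k}}\begin{bmatrix}I & 0_{n_x,2}\end{bmatrix}\exp(\overline{A}_{b,u}\Delta t_k)\begin{bmatrix}0_{n_x+1,1}\\1\end{bmatrix},$$ $$\overline{A}_b=\begin{bmatrix}A-\mu I & \overline{x}_a\\ 0_{1,n_x} & 0\end{bmatrix},\qquad \overline{A}_{b,u}=\begin{bmatrix}A-\mu I & u & 0_{n_x,1}\\ 0_{1,n_x} & -\mu & 1\\ 0_{1,n_x} & 0 & 0\end{bmatrix}.$$ The covariance matrix of $p_k$ is $P_{b,k}=\mathrm{C}[m(T)]+\mathrm{E}[C(T)]$, where $$\mathrm{E}[C(T)]=-\frac{e^{-\mu\Delta t_k}}{1-e^{-\mu\Delta t_k}}\int_0^{\Delta t_k}\exp(A\tau)LQ_\beta L^T\exp(A^T\tau)\,d\tau+\frac{1}{1-e^{-\mu\Delta t_k}}\int_0^{\Delta t_k}\exp\big((A-\tfrac{\mu}{2}I)t\big)C_b\exp\big((A-\tfrac{\mu}{2}I)^Tt\big)\,dt,$$ with $C_b=LQ_\beta L^T+\mu P_a$, and $$\mathrm{C}[m(T)]=\Sigma_{xx}+\Sigma_{xu}+\Sigma_{xu}^T+\Sigma_{uu}-\overline{x}_{b,k}\overline{x}_{b,k}^T,$$ where $$\Sigma_{xx}=\frac{\mu}{1-e^{-\mu\Delta t_k}}\int_0^{\Delta t_k}\exp\big((A-\tfrac{\mu}{2}I)t\big)\overline{x}_a\overline{x}_a^T\exp\big((A-\tfrac{\mu}{2}I)^Tt\big)dt,$$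 $$\Sigma_{xu}=\frac{\mu}{1-e^{-\mu\Delta t_k}}\int_0^{\Delta t_k}\exp\big((A-\mu I)t\big)\overline{x}_a u^T\Big(\int_0^t\exp(A^T\tau)d\tau\Big)dt,$$ $\Sigma_{uu}=-\Sigma_{uu,1}+\Sigma_{uu,2}+\Sigma_{uu,2}^T$, $$\Sigma_{uu,1}=\frac{e^{-\mu\Delta t_k}}{1-e^{-\mu\Delta t_k}}\int_0^{\Delta t_k}\exp(A\tau)d\tau\, uu^T\int_0^{\Delta t_k}\exp(A^T\tau)d\tau,$$ $$\Sigma_{uu,2}=\frac{1}{1-e^{-\mu\Delta t_k}}\int_0^{\Delta t_k}\exp\big((A-\mu I)t\big)uu^T\Big(\int_0^t\exp(A^T\tau)d\tau\Big)dt.$$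
   Context: This arises from a continuous-time multi-target model: targets appear at times of a Poisson process, each appearing target is distributed as $\mathcal{N}(\overline{x}_a,P_a)$ at appearance, its life span is exponential with rate $\mu$, and it moves according to the linear time-invariant SDE $dx(t)=Ax(t)dt+u\,dt+L\,d\beta(t)$ with $\beta$ a Brownian motion with diffusion matrix $Q_\beta$. A target newly born at measurement time $t_k$ (with $\Delta t_k=t_k-t_{k-1}$) is one that appeared at time $t_k-t$ with lag $t\in[0,\Delta t_k)$ and is still alive at $t_k$; the lag has the truncated exponential density $p_k(t)$ above and, given the lag, the target state at $t_k$ is Gaussian with mean $m(t)$ and covariance $C(t)$. $\chi_{[0,\Delta t_k)}$ is the indicator function of $[0,\Delta t_k)$. *)

theory Defs
  imports "HOL-Analysis.Analysis" "HOL-Probability.Probability"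
begin

definition matpow :: "real^'n^'n \<Rightarrow> nat \<Rightarrow> real^'n^'n" where
  "matpow M k = ((\<lambda>X. M ** X) ^^ k) (mat 1)"

definition mexp :: "real^'n^'n \<Rightarrow> real^'n^'n" where
  "mexp M = (\<Sum>k. (1 / fact k) *\<^sub>R matpow M k)"

definition outer :: "real^'m \<Rightarrow> real^'n \<Rightarrow> real^'n^'m" where
  "outer x y = (\<chi> i j. x $ i * y $ j)"

definition cov_matrix :: "real^'n^'n \<Rightarrow> bool" where
  "cov_matrix M \<longleftrightarrow> transpose M = M \<and> (\<forall>x. 0 \<le> x \<bullet> (M *v x))"

text \<open>Augmented matrix Ab = [[A - mu I, xa],[0, 0]] of size (n+1); the extra
  index is None.\<close>
definition Ab_mat :: "real^'n^'n \<Rightarrow> real \<Rightarrow> real^'n \<Rightarrow> real^('n option)^('n option)" where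
  "Ab_mat A mu xa = (\<chi> i j. case (i, j) of
      (Some i', Some j') \<Rightarrow> (A - mu *\<^sub>R mat 1) $ i' $ j'
    | (Some i', None) \<Rightarrow> xa $ i'
    | (None, _) \<Rightarrow> 0)"

text \<open>Augmented matrix Abu = [[A - mu I, u, 0],[0, -mu, 1],[0, 0, 0]] of size (n+2);
  index order: Some (Some i) for the state block, Some None for the second block,
  None for the last.\<close>
definition Abu_mat :: "real^'n^'n \<Rightarrow> real \<Rightarrow> real^'n \<Rightarrow> real^('n option option)^('n option option)" where
  "Abu_mat A mu u = (\<chi> i j. case (i, j) of
      (Some (Some i'), Some (Some j')) \<Rightarrow> (A - mu *\<^sub>R mat 1) $ i' $ j'
    | (Some (Some i'), Some None) \<Rightarrow> u $ i'
    | (Some (Some i'), None) \<Rightarrow> 0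
    | (Some None, Some (Some j')) \<Rightarrow> 0
    | (Some None, Some None) \<Rightarrow> - mu
    | (Some None, None) \<Rightarrow> 1
    | (None, _) \<Rightarrow> 0)"

end

theory Submission
  imports Defs
begin



lemma matrix_add_rdistrib': "((B + C) ** A) = (B ** A) + (C ** A)"
  by (simp add: matrix_matrix_mult_def vec_eq_iff sum.distrib[symmetric] distrib_right)

typedef 'n sq = "UNIV :: (real^'n^'n) set" morphisms sqm Sq by simp
setup_lifting type_definition_sq

instantiation sq :: (finite) real_vector
begin
lift_definition zero_sq :: "'a sq" is "0" .
lift_definition plus_sq :: "'a sq \<Rightarrow> 'a sq \<Rightarrow> 'a sq" is "(+)" .
lift_definition minus_sq :: "'a sq \<Rightarrow> 'a sq \<Rightarrow> 'a sq" is "(-)" .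
lift_definition uminus_sq :: "'a sq \<Rightarrow> 'a sq" is "uminus" .
lift_definition scaleR_sq :: "real \<Rightarrow> 'a sq \<Rightarrow> 'a sq" is "(*\<^sub>R)" .
instance by standard (transfer; simp add: algebra_simps)+
end

instantiation sq :: (finite) real_algebra_1
begin
lift_definition one_sq :: "'a sq" is "mat 1" .
lift_definition times_sq :: "'a sq \<Rightarrow> 'a sq \<Rightarrow> 'a sq" is "(**)" .
instance
proof
  fix a b c :: "'a sq" and r :: real
  show "a * b * c = a * (b * c)" by transfer (simp add: matrix_mul_assoc)
  show "1 * a = a" by transfer simp
  show "a * 1 = a" by transfer simp
  show "(a + b) * c = a * c + b * c" by transfer (simp add: matrix_add_rdistrib')
  show "a * (b + c) = a * b + a * c" by transfer (simp add: matrix_add_ldistrib)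
  show "(0::'a sq) \<noteq> 1" by transfer (simp add: vec_eq_iff mat_def)
  show "r *\<^sub>R a * b = r *\<^sub>R (a * b)" by transfer (simp add: scalar_matrix_assoc)
  show "a * r *\<^sub>R b = r *\<^sub>R (a * b)" by transfer (metis matrix_scalar_ac scalar_matrix_assoc)
qed
end

instantiation sq :: (finite) real_normed_algebra_1
begin
lift_definition norm_sq :: "'a sq \<Rightarrow> real" is "\<lambda>A. onorm ((*v) A)" .
definition dist_sq :: "'a sq \<Rightarrow> 'a sq \<Rightarrow> real" where "dist_sq x y = norm (x - y)"
definition sgn_sq :: "'a sq \<Rightarrow> 'a sq" where "sgn_sq x = x /\<^sub>R norm x"
definition uniformity_sq :: "('a sq \<times> 'a sq) filter" where
  "uniformity_sq = (INF e\<in>{0<..}. principal {(x, y). dist x y < e})"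
definition open_sq :: "'a sq set \<Rightarrow> bool" where
  "open_sq U = (\<forall>x\<in>U. \<forall>\<^sub>F (x', y) in uniformity. x' = x \<longrightarrow> y \<in> U)"
instance
proof
  fix x y :: "'a sq" and r :: real and U :: "'a sq set"
  show "dist x y = norm (x - y)" by (simp add: dist_sq_def)
  show "sgn x = x /\<^sub>R norm x" by (simp add: sgn_sq_def)
  show "(uniformity :: ('a sq \<times> 'a sq) filter) = (INF e\<in>{0<..}. principal {(x, y). dist x y < e})"
    by (simp add: uniformity_sq_def)
  show "open U = (\<forall>x\<in>U. \<forall>\<^sub>F (x', y) in uniformity. x' = x \<longrightarrow> y \<in> U)"
    by (simp add: open_sq_def)
  show "(norm x = 0) = (x = 0)"
  proof transfer
    fix A :: "real^'a^'a"
    show "(onorm ((*v) A) = 0) = (A = 0)"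
      by (simp add: onorm_eq_0[OF matrix_vector_mul_bounded_linear] matrix_eq)
  qed
  show "norm (x + y) \<le> norm x + norm y"
  proof transfer
    fix A B :: "real^'a^'a"
    have "(*v) (A + B) = (\<lambda>x. A *v x + B *v x)" by (simp add: fun_eq_iff matrix_vector_mult_add_rdistrib)
    then show "onorm ((*v) (A + B)) \<le> onorm ((*v) A) + onorm ((*v) B)"
      using onorm_triangle[OF matrix_vector_mul_bounded_linear matrix_vector_mul_bounded_linear] by simp
  qed
  show "norm (r *\<^sub>R x) = \<bar>r\<bar> * norm x"
  proof transfer
    fix r and A :: "real^'a^'a"
    have "(*v) (r *\<^sub>R A) = (\<lambda>x. r *\<^sub>R (A *v x))" by (simp add: fun_eq_iff scaleR_matrix_vector_assoc)
    then show "onorm ((*v) (r *\<^sub>R A)) = \<bar>r\<bar> * onorm ((*v) A)"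
      using onorm_scaleR[OF matrix_vector_mul_bounded_linear] by simp
  qed
  show "norm (x * y) \<le> norm x * norm y"
  proof transfer
    fix A B :: "real^'a^'a"
    have "(*v) (A ** B) = (*v) A \<circ> (*v) B" by (simp add: fun_eq_iff matrix_vector_mul_assoc)
    then show "onorm ((*v) (A ** B)) \<le> onorm ((*v) A) * onorm ((*v) B)"
      using onorm_compose[OF matrix_vector_mul_bounded_linear matrix_vector_mul_bounded_linear] by simp
  qed
  show "norm (1::'a sq) = 1"
  proof transfer
    have "(*v) (mat 1 :: real^'a^'a) = (\<lambda>x. x)" by (simp add: fun_eq_iff)
    then show "onorm ((*v) (mat 1 :: real^'a^'a)) = 1" by (simp add: onorm_id)
  qed
qed
end


lemma norm_vec_le_entries:
  fixes A :: "real^'a^'b"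
  shows "norm A \<le> (\<Sum>i\<in>UNIV. \<Sum>j\<in>UNIV. \<bar>A $ i $ j\<bar>)"
proof -
  have "norm A = L2_set (\<lambda>i. norm (A $ i)) UNIV" by (simp add: norm_vec_def)
  also have "\<dots> \<le> (\<Sum>i\<in>UNIV. norm (A $ i))" by (rule L2_set_le_sum) simp
  also have "\<dots> \<le> (\<Sum>i\<in>UNIV. \<Sum>j\<in>UNIV. \<bar>A $ i $ j\<bar>)"
    by (rule sum_mono) (rule norm_le_l1_cart)
  finally show ?thesis .
qed

lemma norm_sqm_le: "norm (sqm X) \<le> real CARD('a) * real CARD('a) * norm (X :: 'a::finite sq)"
proof -
  have "norm (sqm X) \<le> (\<Sum>i\<in>UNIV. \<Sum>j\<in>UNIV. \<bar>sqm X $ i $ j\<bar>)" by (rule norm_vec_le_entries)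
  also have "\<dots> \<le> (\<Sum>i\<in>(UNIV::'a set). \<Sum>j\<in>(UNIV::'a set). norm X)"
    by (intro sum_mono) (simp add: norm_sq.rep_eq matrix_component_le_onorm)
  finally show ?thesis by simp
qed

lemma norm_Sq_le: "norm (Sq A :: 'a::finite sq) \<le> real CARD('a) * real CARD('a) * norm A"
proof -
  have "norm (Sq A :: 'a sq) \<le> (\<Sum>i\<in>UNIV. \<Sum>j\<in>UNIV. \<bar>A $ i $ j\<bar>)"
    by (simp add: norm_sq.abs_eq eq_onp_def onorm_le_matrix_component_sum)
  also have "\<dots> \<le> (\<Sum>i\<in>(UNIV::'a set). \<Sum>j\<in>(UNIV::'a set). norm A)"
  proof (intro sum_mono)
    fix i j
    have "\<bar>A $ i $ j\<bar> \<le> norm (A $ i)" by (rule component_le_norm_cart)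
    also have "\<dots> \<le> norm A" by (rule Finite_Cartesian_Product.norm_nth_le)
    finally show "\<bar>A $ i $ j\<bar> \<le> norm A" .
  qed
  finally show ?thesis by simp
qed

lemma bounded_linear_sqm: "bounded_linear (sqm :: 'a::finite sq \<Rightarrow> _)"
  by (rule bounded_linear_intro[where K="real CARD('a) * real CARD('a)"])
     (auto simp: plus_sq.rep_eq scaleR_sq.rep_eq mult.commute[of "norm _"] norm_sqm_le)

lemma bounded_linear_Sq: "bounded_linear (Sq :: _ \<Rightarrow> 'a::finite sq)"
  by (rule bounded_linear_intro[where K="real CARD('a) * real CARD('a)"])
     (auto simp: plus_sq.abs_eq scaleR_sq.abs_eq eq_onp_def mult.commute[of "norm _"] norm_Sq_le)

instance sq :: (finite) banach
proof
  fix X :: "nat \<Rightarrow> 'a sq"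
  assume "Cauchy X"
  then have "Cauchy (\<lambda>n. sqm (X n))" by (rule bounded_linear.Cauchy[OF bounded_linear_sqm])
  then obtain L where "(\<lambda>n. sqm (X n)) \<longlonglongrightarrow> L" using Cauchy_convergent_iff convergent_def by blast
  then have "(\<lambda>n. Sq (sqm (X n))) \<longlonglongrightarrow> Sq L" by (rule bounded_linear.tendsto[OF bounded_linear_Sq])
  then show "convergent X" by (auto simp: convergent_def sqm_inverse)
qed


lemma sqm_power: "sqm (X ^ k) = matpow (sqm X) k"
  by (induction k) (simp_all add: matpow_def one_sq.rep_eq times_sq.rep_eq)

lemma matpow_Suc: "matpow M (Suc k) = M ** matpow M k"
  by (simp add: matpow_def)

lemma matpow_0: "matpow M 0 = mat 1"
  by (simp add: matpow_def)

lemma matpow_Suc': "matpow M (Suc k) = matpow M k ** M"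
  by (induction k) (simp_all add: matpow_Suc matpow_0 matrix_mul_assoc)

lemma exp_sums_sq: "(\<lambda>n. (1 / fact n) *\<^sub>R matpow (sqm X) n) sums sqm (exp X)"
proof -
  have "(\<lambda>n. X ^ n /\<^sub>R fact n) sums exp X"
    unfolding exp_def by (rule summable_sums[OF summable_exp_generic])
  from bounded_linear.sums[OF bounded_linear_sqm this]
  show ?thesis by (simp add: scaleR_sq.rep_eq sqm_power divide_inverse_commute)
qed

lemma mexp_sums: "(\<lambda>n. (1 / fact n) *\<^sub>R matpow M n) sums mexp M"
  using exp_sums_sq[of "Sq M"] by (simp add: Sq_inverse mexp_def sums_iff)

lemma mexp_sq: "mexp M = sqm (exp (Sq M))"
  using exp_sums_sq[of "Sq M"] mexp_sums[of M] by (simp add: Sq_inverse sums_unique2)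

lemma Sq_scaleR: "Sq (t *\<^sub>R A) = t *\<^sub>R Sq A"
  by (simp add: scaleR_sq.abs_eq eq_onp_def)

lemma Sq_mult: "Sq (A ** B) = Sq A * Sq B"
  by (simp add: times_sq.abs_eq eq_onp_def)

lemma Sq_add: "Sq (A + B) = Sq A + Sq B"
  by (simp add: plus_sq.abs_eq eq_onp_def)

lemma Sq_one: "Sq (mat 1) = 1"
  by (simp add: one_sq.abs_eq eq_onp_def)

lemma sqm_mult: "sqm (X * Y) = sqm X ** sqm Y"
  by (simp add: times_sq.rep_eq)

lemma mexp_zero[simp]: "mexp 0 = mat 1"
  by (simp add: mexp_sq zero_sq.abs_eq[symmetric] one_sq.rep_eq)

lemma mexp_deriv_left:
  "((\<lambda>t. mexp (t *\<^sub>R A)) has_vector_derivative (A ** mexp (t *\<^sub>R A))) (at t within S)"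
proof -
  have "((\<lambda>t. exp (t *\<^sub>R Sq A)) has_vector_derivative Sq A * exp (t *\<^sub>R Sq A)) (at t within S)"
    using exp_scaleR_has_vector_derivative_left has_vector_derivative_at_within by blast
  from bounded_linear.has_vector_derivative[OF bounded_linear_sqm this]
  show ?thesis by (simp add: mexp_sq Sq_scaleR sqm_mult Sq_inverse)
qed

lemma mexp_commute: "A ** mexp (t *\<^sub>R A) = mexp (t *\<^sub>R A) ** A"
proof -
  have "Sq A * exp (t *\<^sub>R Sq A) = exp (t *\<^sub>R Sq A) * Sq A"
    by (rule exp_times_scaleR_commute[symmetric])
  then have "sqm (Sq A * exp (t *\<^sub>R Sq A)) = sqm (exp (t *\<^sub>R Sq A) * Sq A)" by simp
  then show ?thesis by (simp add: mexp_sq Sq_scaleR sqm_mult Sq_inverse)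
qed

lemma mexp_deriv_right:
  "((\<lambda>t. mexp (t *\<^sub>R A)) has_vector_derivative (mexp (t *\<^sub>R A) ** A)) (at t within S)"
  using mexp_deriv_left[of A t S] by (simp add: mexp_commute)

lemma mexp_add_commuting: "A ** B = B ** A \<Longrightarrow> mexp (A + B) = mexp A ** mexp B"
proof -
  assume "A ** B = B ** A"
  then have "Sq A * Sq B = Sq B * Sq A" by (metis Sq_mult)
  then have "exp (Sq A + Sq B) = exp (Sq A) * exp (Sq B)" by (rule exp_add_commuting)
  then show ?thesis by (simp add: mexp_sq Sq_add sqm_mult)
qed

lemma mexp_scaleR_add: "mexp ((s + t) *\<^sub>R A) = mexp (s *\<^sub>R A) ** mexp (t *\<^sub>R A)"
  by (simp add: scaleR_add_left mexp_add_commuting matrix_scalar_ac scalar_matrix_assoc[symmetric])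

lemma mexp_inverse: "mexp (t *\<^sub>R A) ** mexp ((- t) *\<^sub>R A) = mat 1"
  using mexp_scaleR_add[of t "-t" A, symmetric] by simp

lemma mexp_inverse': "mexp ((- t) *\<^sub>R A) ** mexp (t *\<^sub>R A) = mat 1"
  using mexp_scaleR_add[of "-t" t A, symmetric] by simp

lemma mexp_scalar: "mexp (r *\<^sub>R mat 1) = exp r *\<^sub>R mat 1"
proof -
  have 1: "Sq (r *\<^sub>R mat 1) = of_real r" by (simp add: Sq_scaleR Sq_one of_real_def)
  have "mexp (r *\<^sub>R mat 1) = sqm (of_real (exp r))" by (simp only: mexp_sq 1 exp_of_real)
  then show ?thesis by (simp add: of_real_def scaleR_sq.rep_eq one_sq.rep_eq)
qed

lemma mexp_shift: "mexp (t *\<^sub>R (A + c *\<^sub>R mat 1)) = exp (t * c) *\<^sub>R mexp (t *\<^sub>R A)"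
proof -
  have "mexp (t *\<^sub>R A + (t * c) *\<^sub>R mat 1) = mexp (t *\<^sub>R A) ** mexp ((t * c) *\<^sub>R mat 1)"
    by (rule mexp_add_commuting) (simp add: matrix_scalar_ac scalar_matrix_assoc[symmetric])
  then show ?thesis
    by (simp add: scaleR_add_right mexp_scalar matrix_scalar_ac)
qed

lemma linear_transpose': "linear (transpose :: real^'a^'b \<Rightarrow> real^'b^'a)"
  by (rule linearI) (simp_all add: transpose_def vec_eq_iff)

lemma bounded_linear_transpose: "bounded_linear (transpose :: real^'a^'b \<Rightarrow> real^'b^'a)"
  using linear_conv_bounded_linear linear_transpose' by blast

lemma transpose_matpow: "transpose (matpow A k) = matpow (transpose A) k"
proof (induction k)
  case 0 then show ?case by (simp add: matpow_0)
next
  case (Suc k) then show ?case by (metis matpow_Suc matpow_Suc' matrix_transpose_mul)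
qed

lemma mexp_transpose: "transpose (mexp A) = mexp (transpose A)"
proof -
  from bounded_linear.sums[OF bounded_linear_transpose mexp_sums[of A]]
  have "(\<lambda>n. (1 / fact n) *\<^sub>R matpow (transpose A) n) sums transpose (mexp A)"
    by (simp add: transpose_scalar transpose_matpow)
  with mexp_sums[of "transpose A"] show ?thesis by (simp add: sums_unique2)
qed




lemma bounded_bilinear_mm: "bounded_bilinear ((**) :: real^'a^'b \<Rightarrow> real^'c^'a \<Rightarrow> real^'c^'b)"
  by (rule bilinear_conv_bounded_bilinear[THEN iffD1])
     (auto simp: bilinear_def matrix_add_ldistrib matrix_add_rdistrib' matrix_scalar_ac scalar_matrix_assoc[symmetric] intro!: linearI)

lemma bounded_bilinear_mv: "bounded_bilinear ((*v) :: real^'a^'b \<Rightarrow> real^'a \<Rightarrow> real^'b)"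
  by (rule bilinear_conv_bounded_bilinear[THEN iffD1])
     (auto simp: bilinear_def matrix_vector_right_distrib matrix_vector_mult_add_rdistrib
        matrix_scaleR_vector_ac scaleR_matrix_vector_assoc[symmetric] intro!: linearI)

lemma bounded_linear_mm_left: "bounded_linear (\<lambda>X. (M::real^'a^'b) ** (X::real^'c^'a))"
  by (rule bounded_bilinear.bounded_linear_right[OF bounded_bilinear_mm])

lemma bounded_linear_mm_right: "bounded_linear (\<lambda>X. (X::real^'a^'b) ** (M::real^'c^'a))"
  by (rule bounded_bilinear.bounded_linear_left[OF bounded_bilinear_mm])

lemma bounded_linear_mv_left: "bounded_linear (\<lambda>x. (M::real^'a^'b) *v x)"
  by (rule bounded_bilinear.bounded_linear_right[OF bounded_bilinear_mv])

lemma bounded_linear_mv_right: "bounded_linear (\<lambda>X. (X::real^'a^'b) *v v)"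
  by (rule bounded_bilinear.bounded_linear_left[OF bounded_bilinear_mv])

lemma continuous_on_mexp[continuous_intros]: "continuous_on S (\<lambda>t. mexp (t *\<^sub>R A))"
  by (rule continuous_on_vector_derivative, rule mexp_deriv_left)

lemma integral_empty_real: "b < a \<Longrightarrow> integral {a..b} (f::real \<Rightarrow> 'v::banach) = 0"
  by simp

lemma integral_point_real: "integral {a..a} (f::real \<Rightarrow> 'v::banach) = 0"
  by simp

lemma continuous_indef_integral:
  fixes g :: "real \<Rightarrow> 'v::banach"
  assumes g: "continuous_on UNIV g"
  shows "continuous_on UNIV (\<lambda>t. integral {0..t} g)"
proof (rule continuous_at_imp_continuous_on, intro ballI)
  fix x :: real
  define b where "b = \<bar>x\<bar> + 1"
  have b: "b > 0" "x < b" unfolding b_def by auto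
  define H where "H s = integral {0..s} g" for s
  have H: "continuous_on {0..b} H"
    unfolding H_def by (rule indefinite_integral_continuous_1, rule integrable_continuous_real,
        rule continuous_on_subset[OF g]) auto
  have "continuous_on {..<b} (\<lambda>t. H (max 0 t))"
  proof (rule continuous_on_compose2[OF H])
    show "continuous_on {..<b} (\<lambda>t. max 0 t)" by (intro continuous_on_max continuous_on_const continuous_on_id)
    show "(\<lambda>t. max 0 t) ` {..<b} \<subseteq> {0..b}" using b by auto
  qed
  moreover have "H (max 0 t) = integral {0..t} g" for t
    by (cases "t < 0") (auto simp: H_def max_def)
  ultimately have "continuous_on {..<b} (\<lambda>t. integral {0..t} g)" by simp
  then show "isCont (\<lambda>t. integral {0..t} g) x"
    using b by (meson continuous_on_eq_continuous_at lessThan_iff open_lessThan)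
qed


lemma continuous_on_mv[continuous_intros]:
  "continuous_on S f \<Longrightarrow> continuous_on S g \<Longrightarrow> continuous_on S (\<lambda>x. (f x :: real^'a^'b) *v g x)"
  by (rule bounded_bilinear.continuous_on[OF bounded_bilinear_mv])

lemma continuous_on_mm[continuous_intros]:
  "continuous_on S f \<Longrightarrow> continuous_on S g \<Longrightarrow> continuous_on S (\<lambda>x. (f x :: real^'a^'b) ** (g x :: real^'c^'a))"
  by (rule bounded_bilinear.continuous_on[OF bounded_bilinear_mm])

lemma continuous_on_transpose[continuous_intros]:
  "continuous_on S f \<Longrightarrow> continuous_on S (\<lambda>x. transpose (f x :: real^'a^'b))"
  by (rule bounded_linear.continuous_on[OF bounded_linear_transpose])




lemma integral_mm_left: "f integrable_on S \<Longrightarrow> integral S (\<lambda>x. (M::real^'a^'b) ** (f x :: real^'c^'a)) = M ** integral S f"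
  using integral_linear[OF _ bounded_linear_mm_left, of f S M] by (simp add: o_def)

lemma integral_mm_right: "f integrable_on S \<Longrightarrow> integral S (\<lambda>x. (f x :: real^'a^'b) ** (M::real^'c^'a)) = integral S f ** M"
  using integral_linear[OF _ bounded_linear_mm_right, of f S M] by (simp add: o_def)

lemma integral_mv_left: "f integrable_on S \<Longrightarrow> integral S (\<lambda>x. (M::real^'a^'b) *v f x) = M *v integral S f"
  using integral_linear[OF _ bounded_linear_mv_left, of f S M] by (simp add: o_def)

lemma integral_mv_right: "f integrable_on S \<Longrightarrow> integral S (\<lambda>x. (f x::real^'a^'b) *v v) = integral S f *v v"
  using integral_linear[OF _ bounded_linear_mv_right, of f S v] by (simp add: o_def)

lemma integral_transpose: "f integrable_on S \<Longrightarrow> integral S (\<lambda>x. transpose (f x :: real^'a^'b)) = transpose (integral S f)"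
  using integral_linear[OF _ bounded_linear_transpose, of f S] by (simp add: o_def)

lemma ftc_int:
  fixes f :: "real \<Rightarrow> 'v::banach"
  assumes "0 \<le> t" "\<And>s. s \<in> {0..t} \<Longrightarrow> (f has_vector_derivative f' s) (at s within {0..t})"
  shows "integral {0..t} f' = f t - f 0"
  using fundamental_theorem_of_calculus[OF assms] by (rule integral_unique)

lemma matrix_mul_uminus_right: "(X::real^'a^'b) ** (- M :: real^'c^'a) = - (X ** M)"
  by (simp add: matrix_matrix_mult_def vec_eq_iff sum_negf)

lemma matrix_vector_uminus: "(- X :: real^'a^'b) *v z = - (X *v z)"
  by (simp add: matrix_vector_mult_def vec_eq_iff sum_negf)

lemma ode_unique:
  fixes M :: "real^'a^'a" and z :: "real \<Rightarrow> real^'a"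
  assumes T: "0 \<le> T"
    and d: "\<And>t. t \<in> {0..T} \<Longrightarrow> (z has_vector_derivative (M *v z t)) (at t within {0..T})"
  shows "z T = mexp (T *\<^sub>R M) *v z 0"
proof -
  define h where "h t = mexp (t *\<^sub>R (-M)) *v z t" for t
  have "(h has_vector_derivative 0) (at t within {0..T})" if t: "t \<in> {0..T}" for t
  proof -
    have "(h has_vector_derivative (mexp (t *\<^sub>R (-M)) *v (M *v z t) + ((-M) ** mexp (t *\<^sub>R (-M))) *v z t)) (at t within {0..T})"
      unfolding h_def by (rule bounded_bilinear.has_vector_derivative[OF bounded_bilinear_mv mexp_deriv_left d[OF t]])
    moreover have "mexp (t *\<^sub>R (-M)) *v (M *v z t) + ((-M) ** mexp (t *\<^sub>R (-M))) *v z t = 0"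
      using mexp_commute[of "-M" t]
      by (simp add: matrix_vector_mul_assoc matrix_mul_uminus_right matrix_vector_uminus)
    ultimately show ?thesis by simp
  qed
  then have "integral {0..T} (\<lambda>t. 0) = h T - h 0" by (intro ftc_int T) auto
  then have "h T = h 0" by simp
  then have "mexp (T *\<^sub>R (-M)) *v z T = z 0" by (simp add: h_def)
  then have "mexp (T *\<^sub>R M) *v (mexp (T *\<^sub>R (-M)) *v z T) = mexp (T *\<^sub>R M) *v z 0" by simp
  moreover have "mexp (T *\<^sub>R M) ** mexp (- (T *\<^sub>R M)) = mat 1" using mexp_inverse[of T M] by simp
  ultimately show ?thesis by (simp add: matrix_vector_mul_assoc)
qed

lemma sum_option_UNIV: "(\<Sum>j\<in>(UNIV::'a::finite option set). f j) = f None + (\<Sum>i\<in>UNIV. f (Some i))"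
  by (simp add: UNIV_option_conv sum.reindex)

lemma mexp_column: "(mexp M *v axis j 1) $ i = mexp M $ i $ j"
  by (simp add: matrix_vector_mult_basis column_def)


lemma mexp_vec_deriv:
  "((\<lambda>s. mexp (s *\<^sub>R B) *v v) has_vector_derivative ((B ** mexp (t *\<^sub>R B)) *v v)) (at t within S)"
  by (rule bounded_linear.has_vector_derivative[OF bounded_linear_mv_right mexp_deriv_left])

lemma B_int_mexp:
  assumes "0 \<le> t"
  shows "B *v integral {0..t} (\<lambda>s. mexp (s *\<^sub>R B) *v v) = mexp (t *\<^sub>R B) *v v - v"
proof -
  have "B *v integral {0..t} (\<lambda>s. mexp (s *\<^sub>R B) *v v) = integral {0..t} (\<lambda>s. B *v (mexp (s *\<^sub>R B) *v v))"
    by (rule integral_mv_left[symmetric]) (intro integrable_continuous_real continuous_intros)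
  also have "\<dots> = integral {0..t} (\<lambda>s. (B ** mexp (s *\<^sub>R B)) *v v)"
    by (simp add: matrix_vector_mul_assoc)
  also have "\<dots> = mexp (t *\<^sub>R B) *v v - mexp (0 *\<^sub>R B) *v v"
    by (rule ftc_int[OF assms mexp_vec_deriv])
  finally show ?thesis by simp
qed

definition emb1 :: "real^'a \<Rightarrow> real^('a option)" where
  "emb1 v = (\<chi> j. case j of Some i \<Rightarrow> v $ i | None \<Rightarrow> 0)"

lemma bounded_linear_emb1: "bounded_linear emb1"
  by (rule linear_conv_bounded_linear[THEN iffD1]) (auto intro!: linearI simp: emb1_def vec_eq_iff split: option.splits)

lemma Ab_column:
  fixes A :: "real^'n^'n"
  assumes T: "0 \<le> T"
  shows "(\<chi> i. mexp (T *\<^sub>R Ab_mat A mu xa) $ Some i $ None) =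
         integral {0..T} (\<lambda>s. mexp (s *\<^sub>R (A - mu *\<^sub>R mat 1)) *v xa)"
proof -
  define B where "B = A - mu *\<^sub>R mat 1"
  define g where "g s = mexp (s *\<^sub>R B) *v xa" for s
  define G where "G t = integral {0..t} g" for t
  define w where "w t = emb1 (G t) + axis None 1" for t
  have d: "(w has_vector_derivative (Ab_mat A mu xa *v w t)) (at t within {0..T})" if t: "t \<in> {0..T}" for t
  proof -
    have "(G has_vector_derivative g t) (at t within {0..T})"
      unfolding G_def by (rule integral_has_vector_derivative[OF _ t]) (auto simp: g_def intro!: continuous_intros)
    from bounded_linear.has_vector_derivative[OF bounded_linear_emb1 this]
    have "(w has_vector_derivative emb1 (g t) + 0) (at t within {0..T})"
      unfolding w_def by (intro has_vector_derivative_add has_vector_derivative_const)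
    then have "(w has_vector_derivative emb1 (g t)) (at t within {0..T})" by simp
    moreover have "emb1 (g t) = Ab_mat A mu xa *v w t"
    proof -
      have "B *v G t + xa = g t" using B_int_mexp[of t B xa] t by (simp add: G_def g_def[abs_def])
      then show ?thesis
        by (auto simp: vec_eq_iff emb1_def w_def Ab_mat_def matrix_vector_mult_def sum_option_UNIV
             axis_def B_def split: option.splits; metis add.commute)
    qed
    ultimately show ?thesis by simp
  qed
  have "w T = mexp (T *\<^sub>R Ab_mat A mu xa) *v w 0" by (rule ode_unique[OF T d])
  moreover have "w 0 = axis None 1" by (simp add: w_def G_def emb1_def vec_eq_iff split: option.splits)
  ultimately have "(\<chi> i. mexp (T *\<^sub>R Ab_mat A mu xa) $ Some i $ None) = (\<chi> i. w T $ Some i)"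
    by (simp add: mexp_column)
  also have "\<dots> = G T" by (simp add: w_def emb1_def vec_eq_iff axis_def)
  finally show ?thesis by (simp add: G_def g_def[abs_def] B_def)
qed


lemma A_int_mexp:
  assumes "0 \<le> t"
  shows "A ** integral {0..t} (\<lambda>s. mexp (s *\<^sub>R A)) = mexp (t *\<^sub>R A) - mat 1"
proof -
  have "A ** integral {0..t} (\<lambda>s. mexp (s *\<^sub>R A)) = integral {0..t} (\<lambda>s. A ** mexp (s *\<^sub>R A))"
    by (rule integral_mm_left[symmetric]) (intro integrable_continuous_real continuous_intros)
  also have "\<dots> = mexp (t *\<^sub>R A) - mexp (0 *\<^sub>R A)"
    by (rule ftc_int[OF assms mexp_deriv_left])
  finally show ?thesis by simp
qed

lemma continuous_on_F[continuous_intros]: "continuous_on S (\<lambda>t. integral {0..t} (\<lambda>s. mexp (s *\<^sub>R A)))"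
  by (rule continuous_on_subset[OF continuous_indef_integral]) (auto intro!: continuous_intros)

lemma F_deriv:
  assumes "t \<in> {0..T}"
  shows "((\<lambda>t. integral {0..t} (\<lambda>s. mexp (s *\<^sub>R A))) has_vector_derivative mexp (t *\<^sub>R A)) (at t within {0..T})"
  by (rule integral_has_vector_derivative[OF _ assms]) (intro continuous_intros)

lemma key_identity2:
  fixes A :: "real^'n^'n" and u :: "real^'n"
  assumes mu: "mu > 0" and t: "0 \<le> t"
  defines "F \<equiv> \<lambda>s. integral {0..s} (\<lambda>\<tau>. mexp (\<tau> *\<^sub>R A))"
  defines "h \<equiv> \<lambda>s. exp (- mu * s) *\<^sub>R (F s *v u)"
  shows "h t = (A - mu *\<^sub>R mat 1) *v integral {0..t} h + ((1 - exp (- mu * t)) / mu) *\<^sub>R u"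
proof -
  define B where "B = A - mu *\<^sub>R mat 1"
  define P where "P s = h s - B *v integral {0..s} h - ((1 - exp (- mu * s)) / mu) *\<^sub>R u" for s
  have hc: "continuous_on {0..t} h" unfolding h_def F_def by (intro continuous_intros)
  have "(P has_vector_derivative 0) (at s within {0..t})" if s: "s \<in> {0..t}" for s
  proof -
    have e: "((\<lambda>s. exp (- mu * s)) has_real_derivative (- mu * exp (- mu * s))) (at s within {0..t})"
      by (auto intro!: derivative_eq_intros)
    have Fd: "((\<lambda>s. F s *v u) has_vector_derivative (mexp (s *\<^sub>R A) *v u)) (at s within {0..t})"
      unfolding F_def by (rule bounded_linear.has_vector_derivative[OF bounded_linear_mv_right F_deriv[OF s]])
    have hd: "(h has_vector_derivative (exp (- mu * s) *\<^sub>R (mexp (s *\<^sub>R A) *v u) + (- mu * exp (- mu * s)) *\<^sub>R (F s *v u))) (at s within {0..t})"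
      unfolding h_def by (rule has_vector_derivative_scaleR[OF e Fd])
    have Gd: "((\<lambda>s. B *v integral {0..s} h) has_vector_derivative B *v h s) (at s within {0..t})"
      by (rule bounded_linear.has_vector_derivative[OF bounded_linear_mv_left integral_has_vector_derivative[OF hc s]])
    have phid: "((\<lambda>s. ((1 - exp (- mu * s)) / mu) *\<^sub>R u) has_vector_derivative (exp (- mu * s)) *\<^sub>R u) (at s within {0..t})"
    proof -
      have "((\<lambda>s. (1 - exp (- mu * s)) / mu) has_real_derivative exp (- mu * s)) (at s within {0..t})"
        using mu by (auto intro!: derivative_eq_intros)
      from has_vector_derivative_scaleR[OF this has_vector_derivative_const[of u]]
      show ?thesis by simp
    qed
    have "(P has_vector_derivative
        (exp (- mu * s) *\<^sub>R (mexp (s *\<^sub>R A) *v u) + (- mu * exp (- mu * s)) *\<^sub>R (F s *v u))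
        - B *v h s - exp (- mu * s) *\<^sub>R u) (at s within {0..t})"
      unfolding P_def by (intro has_vector_derivative_diff hd Gd phid)
    moreover have "(exp (- mu * s) *\<^sub>R (mexp (s *\<^sub>R A) *v u) + (- mu * exp (- mu * s)) *\<^sub>R (F s *v u))
        - B *v h s - exp (- mu * s) *\<^sub>R u = 0"
    proof -
      have AF: "A ** F s = mexp (s *\<^sub>R A) - mat 1" unfolding F_def by (rule A_int_mexp) (use s in auto)
      have "B *v h s = exp (- mu * s) *\<^sub>R ((A ** F s) *v u - mu *\<^sub>R (F s *v u))"
        by (simp add: B_def h_def matrix_vector_mult_diff_rdistrib matrix_vector_mul_assoc[symmetric]
            matrix_scaleR_vector_ac scaleR_matrix_vector_assoc[symmetric])
      also have "\<dots> = exp (- mu * s) *\<^sub>R (mexp (s *\<^sub>R A) *v u - u - mu *\<^sub>R (F s *v u))"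
        by (simp add: AF matrix_vector_mult_diff_rdistrib)
      finally show ?thesis by (simp add: algebra_simps)
    qed
    ultimately show ?thesis by simp
  qed
  then have "integral {0..t} (\<lambda>s. 0) = P t - P 0" by (intro ftc_int t) auto
  moreover have "P 0 = 0" by (simp add: P_def h_def F_def)
  ultimately have "P t = 0" by simp
  then show ?thesis by (simp add: P_def B_def diff_eq_eq add.commute)
qed


definition emb2 :: "real^'a \<Rightarrow> real^('a option option)" where
  "emb2 v = (\<chi> j. case j of Some (Some i) \<Rightarrow> v $ i | _ \<Rightarrow> 0)"

lemma bounded_linear_emb2: "bounded_linear emb2"
  by (rule linear_conv_bounded_linear[THEN iffD1]) (auto intro!: linearI simp: emb2_def vec_eq_iff split: option.splits)

lemma Abu_column:
  fixes A :: "real^'n^'n"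
  assumes mu: "mu > 0" and T: "0 \<le> T"
  shows "(\<chi> i. mexp (T *\<^sub>R Abu_mat A mu u) $ Some (Some i) $ None) =
         integral {0..T} (\<lambda>s. exp (- mu * s) *\<^sub>R (integral {0..s} (\<lambda>\<tau>. mexp (\<tau> *\<^sub>R A)) *v u))"
proof -
  define F where "F = (\<lambda>s. integral {0..s} (\<lambda>\<tau>. mexp (\<tau> *\<^sub>R A)))"
  define h where "h = (\<lambda>s. exp (- mu * s) *\<^sub>R (F s *v u))"
  define G where "G t = integral {0..t} h" for t
  define phi where "phi t = (1 - exp (- mu * t)) / mu" for t
  define w where "w t = emb2 (G t) + phi t *\<^sub>R axis (Some None) 1 + axis None 1" for t
  have hc: "continuous_on {0..T} h" unfolding h_def F_def by (intro continuous_intros)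
  have d: "(w has_vector_derivative (Abu_mat A mu u *v w t)) (at t within {0..T})" if t: "t \<in> {0..T}" for t
  proof -
    have "(G has_vector_derivative h t) (at t within {0..T})"
      unfolding G_def by (rule integral_has_vector_derivative[OF hc t])
    from bounded_linear.has_vector_derivative[OF bounded_linear_emb2 this]
    have 1: "((\<lambda>t. emb2 (G t)) has_vector_derivative emb2 (h t)) (at t within {0..T})" .
    have "(phi has_real_derivative exp (- mu * t)) (at t within {0..T})"
      unfolding phi_def[abs_def] using mu by (auto intro!: derivative_eq_intros)
    from has_vector_derivative_scaleR[OF this has_vector_derivative_const[of "axis (Some None) 1"]]
    have 2: "((\<lambda>t. phi t *\<^sub>R axis (Some None) 1) has_vector_derivative exp (- mu * t) *\<^sub>R axis (Some None) 1) (at t within {0..T})"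
      by simp
    have "(w has_vector_derivative emb2 (h t) + exp (- mu * t) *\<^sub>R axis (Some None) 1 + 0) (at t within {0..T})"
      unfolding w_def by (intro has_vector_derivative_add 1 2 has_vector_derivative_const)
    moreover have "emb2 (h t) + exp (- mu * t) *\<^sub>R axis (Some None) 1 + 0 = Abu_mat A mu u *v w t"
    proof -
      have K: "h t = (A - mu *\<^sub>R mat 1) *v G t + phi t *\<^sub>R u"
        using key_identity2[OF mu, of t A u] t by (simp add: G_def h_def F_def phi_def)
      have ph: "- (mu * phi t) + 1 = exp (- mu * t)" using mu by (simp add: phi_def)
      show ?thesis
        using K ph by (auto simp: vec_eq_iff emb2_def w_def Abu_mat_def matrix_vector_mult_def sum_option_UNIV
             axis_def split: option.splits; simp add: algebra_simps)
    qed
    ultimately show ?thesis by simp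
  qed
  have "w T = mexp (T *\<^sub>R Abu_mat A mu u) *v w 0" by (rule ode_unique[OF T d])
  moreover have "w 0 = axis None 1" by (simp add: w_def G_def phi_def emb2_def vec_eq_iff split: option.splits)
  ultimately have "(\<chi> i. mexp (T *\<^sub>R Abu_mat A mu u) $ Some (Some i) $ None) = (\<chi> i. w T $ Some (Some i))"
    by (simp add: mexp_column)
  also have "\<dots> = G T" by (simp add: w_def emb2_def vec_eq_iff axis_def)
  finally show ?thesis by (simp add: G_def h_def F_def)
qed




lemma int_exp_neg:
  fixes mu D :: real
  assumes mu: "mu > 0" and D: "0 \<le> D"
  shows "integral {0..D} (\<lambda>t. exp (- mu * t)) = (1 - exp (- mu * D)) / mu"
proof -
  have "((\<lambda>t. - exp (- mu * t) / mu) has_vector_derivative exp (- mu * s)) (at s within {0..D})" for s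
    unfolding has_real_derivative_iff_has_vector_derivative[symmetric]
    using mu by (auto intro!: derivative_eq_intros)
  then have "integral {0..D} (\<lambda>t. exp (- mu * t)) = (- exp (- mu * D) / mu) - (- exp (- mu * 0) / mu)"
    using ftc_int[of D "\<lambda>t. - exp (- mu * t) / mu" "\<lambda>t. exp (- mu * t)"] D by simp
  also have "\<dots> = (1 - exp (- mu * D)) / mu" using mu by (simp add: field_simps)
  finally show ?thesis .
qed

lemma MT_lborel:
  fixes f :: "real \<Rightarrow> 'v::euclidean_space"
  assumes mu: "mu > 0" and D: "D > 0"
    and f: "continuous_on UNIV f"
    and c: "c = mu / (1 - exp (- mu * D))"
    and g: "g = (\<lambda>t. c * exp (- mu * t) * indicator {0..<D} t)"
  shows "integrable lborel (\<lambda>t. g t *\<^sub>R f t)"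
    and "(\<integral>t. g t *\<^sub>R f t \<partial>lborel) = c *\<^sub>R integral {0..D} (\<lambda>t. exp (- mu * t) *\<^sub>R f t)"
proof -
  define k where "k t = c *\<^sub>R (exp (- mu * t) *\<^sub>R f t)" for t
  have eq: "g t *\<^sub>R f t = indicator {0..<D} t *\<^sub>R k t" for t
    by (simp add: g k_def indicator_def)
  have "integrable lborel (\<lambda>t. indicator {0..D} t *\<^sub>R k t)"
    unfolding k_def by (intro borel_integrable_compact compact_Icc continuous_intros continuous_on_subset[OF f]) auto
  from integrable_mult_indicator[OF _ this, of "{0..<D}"]
  have "integrable lborel (\<lambda>t. indicator {0..<D} t *\<^sub>R (indicator {0..D} t *\<^sub>R k t))"
    by simp
  moreover have "(\<lambda>t. indicator {0..<D} t *\<^sub>R (indicator {0..D} t *\<^sub>R k t)) = (\<lambda>t. indicator {0..<D} t *\<^sub>R k t)"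
    by (rule ext) (simp add: indicator_def)
  ultimately have I: "integrable lborel (\<lambda>t. indicator {0..<D} t *\<^sub>R k t)" by (simp only:)
  then show "integrable lborel (\<lambda>t. g t *\<^sub>R f t)" by (simp add: eq)
  have "(\<integral>t. g t *\<^sub>R f t \<partial>lborel) = set_lebesgue_integral lborel {0..<D} k"
    by (simp add: eq set_lebesgue_integral_def)
  also have "\<dots> = integral {0..<D} k"
    using I by (intro set_borel_integral_eq_integral) (simp add: set_integrable_def)
  also have "\<dots> = integral {0..D} k"
  proof (rule integral_spike_set)
    show "negligible {x \<in> {0..<D} - {0..D}. k x \<noteq> 0}" by (rule negligible_subset[of "{}"]) auto
    show "negligible {x \<in> {0..D} - {0..<D}. k x \<noteq> 0}" by (rule negligible_subset[OF negligible_sing[of D]]) auto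
  qed
  also have "\<dots> = c *\<^sub>R integral {0..D} (\<lambda>t. exp (- mu * t) *\<^sub>R f t)" by (simp only: k_def[abs_def] integral_cmul)
  finally show "(\<integral>t. g t *\<^sub>R f t \<partial>lborel) = c *\<^sub>R integral {0..D} (\<lambda>t. exp (- mu * t) *\<^sub>R f t)" .
qed

lemma MT_integral:
  fixes f :: "real \<Rightarrow> 'v::euclidean_space"
  assumes mu: "mu > 0" and D: "D > 0"
    and f: "continuous_on UNIV f"
    and c: "c = mu / (1 - exp (- mu * D))"
    and g: "g = (\<lambda>t. c * exp (- mu * t) * indicator {0..<D} t)"
  shows "integrable (density lborel (\<lambda>t. ennreal (g t))) f"
    and "(\<integral>t. f t \<partial>density lborel (\<lambda>t. ennreal (g t))) = c *\<^sub>R integral {0..D} (\<lambda>t. exp (- mu * t) *\<^sub>R f t)"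
proof -
  have "exp (- mu * D) < 1" using mu D by simp
  then have cpos: "c > 0" using mu by (simp add: c)
  have gm: "g \<in> borel_measurable lborel" unfolding g by measurable
  have gnn: "AE t in lborel. 0 \<le> g t" using cpos by (simp add: g)
  have fm: "f \<in> borel_measurable lborel" using f by (simp add: borel_measurable_continuous_onI)
  show "integrable (density lborel (\<lambda>t. ennreal (g t))) f"
    using integrable_density[OF fm gm gnn] MT_lborel(1)[OF mu D f c g] by simp
  show "(\<integral>t. f t \<partial>density lborel (\<lambda>t. ennreal (g t))) = c *\<^sub>R integral {0..D} (\<lambda>t. exp (- mu * t) *\<^sub>R f t)"
    using integral_density[OF fm gm gnn] MT_lborel(2)[OF mu D f c g] by simp
qed

lemma MT_prob:
  assumes mu: "mu > 0" and D: "D > 0"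
    and c: "c = mu / (1 - exp (- mu * D))"
    and g: "g = (\<lambda>t. c * exp (- mu * t) * indicator {0..<D} t)"
  shows "prob_space (density lborel (\<lambda>t. ennreal (g t)))"
proof (rule prob_spaceI)
  have "exp (- mu * D) < 1" using mu D by simp
  then have cpos: "c > 0" using mu by (simp add: c)
  have gm: "g \<in> borel_measurable lborel" unfolding g by measurable
  have I: "integrable lborel (\<lambda>t. g t *\<^sub>R (1::real))" and
    V: "(\<integral>t. g t *\<^sub>R (1::real) \<partial>lborel) = c *\<^sub>R integral {0..D} (\<lambda>t. exp (- mu * t) *\<^sub>R (1::real))"
    by (rule MT_lborel[OF mu D _ c g]; simp)+
  have "emeasure (density lborel (\<lambda>t. ennreal (g t))) (space (density lborel (\<lambda>t. ennreal (g t))))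
      = (\<integral>\<^sup>+t. ennreal (g t) \<partial>lborel)"
    using gm by (simp add: emeasure_density)
  also have "\<dots> = ennreal (\<integral>t. g t \<partial>lborel)"
    using I cpos by (intro nn_integral_eq_integral) (auto simp: g)
  also have "(\<integral>t. g t \<partial>lborel) = 1"
    using V int_exp_neg[OF mu, of D] D mu \<open>exp (- mu * D) < 1\<close> by (simp add: c)
  finally show "emeasure (density lborel (\<lambda>t. ennreal (g t))) (space (density lborel (\<lambda>t. ennreal (g t)))) = 1"
    by simp
qed




lemma bind_integral_nonneg:
  fixes g :: "'b \<Rightarrow> real"
  assumes K: "K \<in> M \<rightarrow>\<^sub>M subprob_algebra N" and ne: "space M \<noteq> {}"
    and gm: "g \<in> borel_measurable N" and nn: "\<And>y. 0 \<le> g y"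
    and int: "integrable (M \<bind> K) g"
  shows "integrable M (\<lambda>x. \<integral>y. g y \<partial>K x)"
    and "(\<integral>y. g y \<partial>(M \<bind> K)) = (\<integral>x. \<integral>y. g y \<partial>K x \<partial>M)"
    and "AE x in M. integrable (K x) g"
proof -
  have N1: "(\<integral>\<^sup>+y. ennreal (g y) \<partial>(M \<bind> K)) = (\<integral>\<^sup>+x. \<integral>\<^sup>+y. ennreal (g y) \<partial>K x \<partial>M)"
    by (rule nn_integral_bind[OF _ K]) (use gm in measurable)
  have N2: "(\<integral>\<^sup>+y. ennreal (g y) \<partial>(M \<bind> K)) = ennreal (\<integral>y. g y \<partial>(M \<bind> K))"
    using int nn by (intro nn_integral_eq_integral) auto
  have m1: "(\<lambda>x. \<integral>\<^sup>+y. ennreal (g y) \<partial>K x) \<in> borel_measurable M"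
    by (rule measurable_compose[OF K nn_integral_measurable_subprob_algebra]) (use gm in measurable)
  have m2: "(\<lambda>x. \<integral>y. g y \<partial>K x) \<in> borel_measurable M"
    by (rule measurable_compose[OF K integral_measurable_subprob_algebra[OF gm]])
  have fin: "AE x in M. (\<integral>\<^sup>+y. ennreal (g y) \<partial>K x) \<noteq> \<infinity>"
    by (rule nn_integral_PInf_AE[OF m1]) (simp add: N1[symmetric] N2)
  have ae: "AE x in M. integrable (K x) g \<and> (\<integral>\<^sup>+y. ennreal (g y) \<partial>K x) = ennreal (\<integral>y. g y \<partial>K x)"
    using fin
  proof (rule AE_mp, intro AE_I2 impI)
    fix x assume x: "x \<in> space M" and f: "(\<integral>\<^sup>+y. ennreal (g y) \<partial>K x) \<noteq> \<infinity>"
    have gmx: "g \<in> borel_measurable (K x)" by (subst measurable_cong_sets[OF subprob_measurableD(2)[OF K x] refl]) (rule gm)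
    have "integrable (K x) g" using gmx f nn by (simp add: integrable_iff_bounded less_top)
    then show "integrable (K x) g \<and> (\<integral>\<^sup>+y. ennreal (g y) \<partial>K x) = ennreal (\<integral>y. g y \<partial>K x)"
      using nn by (simp add: nn_integral_eq_integral)
  qed
  then show "AE x in M. integrable (K x) g" by auto
  have N3: "(\<integral>\<^sup>+x. ennreal (\<integral>y. g y \<partial>K x) \<partial>M) = ennreal (\<integral>y. g y \<partial>(M \<bind> K))"
    using ae by (subst N2[symmetric], subst N1) (intro nn_integral_cong_AE, auto)
  have nn2: "0 \<le> (\<integral>y. g y \<partial>K x)" for x using nn by (simp add: integral_nonneg)
  show I: "integrable M (\<lambda>x. \<integral>y. g y \<partial>K x)"
    using m2 N3 nn2 by (simp add: integrable_iff_bounded)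
  have "ennreal (\<integral>x. \<integral>y. g y \<partial>K x \<partial>M) = ennreal (\<integral>y. g y \<partial>(M \<bind> K))"
    using nn_integral_eq_integral[OF I] nn2 N3 by simp
  then show "(\<integral>y. g y \<partial>(M \<bind> K)) = (\<integral>x. \<integral>y. g y \<partial>K x \<partial>M)"
    using nn2 nn by (simp add: integral_nonneg)
qed


lemma bind_integral_real:
  fixes f :: "'b \<Rightarrow> real"
  assumes K: "K \<in> M \<rightarrow>\<^sub>M subprob_algebra N" and ne: "space M \<noteq> {}"
    and fm: "f \<in> borel_measurable N"
    and int: "integrable (M \<bind> K) f"
  shows "integrable M (\<lambda>x. \<integral>y. f y \<partial>K x)"
    and "(\<integral>y. f y \<partial>(M \<bind> K)) = (\<integral>x. \<integral>y. f y \<partial>K x \<partial>M)"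
proof -
  define fp where "fp y = max (f y) 0" for y
  define fn where "fn y = max (- f y) 0" for y
  have fpm: "fp \<in> borel_measurable N" "fn \<in> borel_measurable N" unfolding fp_def fn_def using fm by measurable
  have ip: "integrable (M \<bind> K) fp" "integrable (M \<bind> K) fn" unfolding fp_def fn_def using int by auto
  have nn: "\<And>y. 0 \<le> fp y" "\<And>y. 0 \<le> fn y" by (auto simp: fp_def fn_def)
  note P = bind_integral_nonneg[OF K ne fpm(1) nn(1) ip(1)]
  note Q = bind_integral_nonneg[OF K ne fpm(2) nn(2) ip(2)]
  have fpn: "f y = fp y - fn y" for y by (simp add: fp_def fn_def max_def)
  have ae: "AE x in M. (\<integral>y. f y \<partial>K x) = (\<integral>y. fp y \<partial>K x) - (\<integral>y. fn y \<partial>K x)"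
    using P(3) Q(3) by eventually_elim (simp add: fpn[abs_def])
  have m: "(\<lambda>x. \<integral>y. f y \<partial>K x) \<in> borel_measurable M"
    by (rule measurable_compose[OF K integral_measurable_subprob_algebra[OF fm]])
  have m2: "(\<lambda>x. (\<integral>y. fp y \<partial>K x) - (\<integral>y. fn y \<partial>K x)) \<in> borel_measurable M"
    using measurable_compose[OF K integral_measurable_subprob_algebra[OF fpm(1)]]
      measurable_compose[OF K integral_measurable_subprob_algebra[OF fpm(2)]] by measurable
  show "integrable M (\<lambda>x. \<integral>y. f y \<partial>K x)"
    using integrable_cong_AE[OF m m2 ae] P(1) Q(1) by auto
  have "(\<integral>y. f y \<partial>(M \<bind> K)) = (\<integral>y. fp y \<partial>(M \<bind> K)) - (\<integral>y. fn y \<partial>(M \<bind> K))"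
    using ip by (simp add: fpn[abs_def])
  also have "\<dots> = (\<integral>x. (\<integral>y. fp y \<partial>K x) - (\<integral>y. fn y \<partial>K x) \<partial>M)"
    using P Q by simp
  also have "\<dots> = (\<integral>x. \<integral>y. f y \<partial>K x \<partial>M)"
    by (rule integral_cong_AE[OF m2 m]) (use ae in auto)
  finally show "(\<integral>y. f y \<partial>(M \<bind> K)) = (\<integral>x. \<integral>y. f y \<partial>K x \<partial>M)" .
qed

lemma bind_integral_vec:
  fixes f :: "'b \<Rightarrow> 'v::euclidean_space"
  assumes K: "K \<in> M \<rightarrow>\<^sub>M subprob_algebra N" and ne: "space M \<noteq> {}"
    and fm: "f \<in> borel_measurable N"
    and int: "integrable (M \<bind> K) f"
  shows "(\<integral>y. f y \<partial>(M \<bind> K)) = (\<integral>x. \<integral>y. f y \<partial>K x \<partial>M)"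
proof -
  have nm: "(\<lambda>y. norm (f y)) \<in> borel_measurable N" using fm by measurable
  note Nrm = bind_integral_nonneg[OF K ne nm _ integrable_norm[OF int]]
  have aeint: "AE x in M. integrable (K x) f"
  proof -
    have "AE x in M. integrable (K x) (\<lambda>y. norm (f y))" using Nrm(3) by simp
    then show ?thesis
    proof (rule AE_mp, intro AE_I2 impI)
      fix x assume x: "x \<in> space M" and i: "integrable (K x) (\<lambda>y. norm (f y))"
      have "f \<in> borel_measurable (K x)" by (subst measurable_cong_sets[OF subprob_measurableD(2)[OF K x] refl]) (rule fm)
      then show "integrable (K x) f" using i integrable_norm_iff by blast
    qed
  qed
  define h where "h x = (\<integral>y. f y \<partial>K x)" for x
  have hm: "h \<in> borel_measurable M" unfolding h_def
    by (rule measurable_compose[OF K integral_measurable_subprob_algebra[OF fm]])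
  have comp: "integrable M (\<lambda>x. h x \<bullet> b) \<and> (\<integral>x. h x \<bullet> b \<partial>M) = (\<integral>y. f y \<bullet> b \<partial>(M \<bind> K))" if b: "b \<in> Basis" for b
  proof -
    have bm: "(\<lambda>y. f y \<bullet> b) \<in> borel_measurable N" using fm by measurable
    have bi: "integrable (M \<bind> K) (\<lambda>y. f y \<bullet> b)" using int by simp
    note R = bind_integral_real[OF K ne bm bi]
    have ae: "AE x in M. h x \<bullet> b = (\<integral>y. f y \<bullet> b \<partial>K x)"
      using aeint by eventually_elim (simp add: h_def)
    have m2: "(\<lambda>x. \<integral>y. f y \<bullet> b \<partial>K x) \<in> borel_measurable M"
      by (rule measurable_compose[OF K integral_measurable_subprob_algebra[OF bm]])
    have m1: "(\<lambda>x. h x \<bullet> b) \<in> borel_measurable M" using hm by measurable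
    show ?thesis
      using integrable_cong_AE[OF m1 m2 ae] integral_cong_AE[OF m1 m2 ae] R by simp
  qed
  have hi: "integrable M h"
  proof -
    have "integrable M (\<lambda>x. \<Sum>b\<in>Basis. (h x \<bullet> b) *\<^sub>R b)" using comp by auto
    then show ?thesis by (simp add: euclidean_representation)
  qed
  show ?thesis
  proof (rule euclidean_eqI)
    fix b :: 'v assume b: "b \<in> Basis"
    have "(\<integral>y. f y \<partial>(M \<bind> K)) \<bullet> b = (\<integral>y. f y \<bullet> b \<partial>(M \<bind> K))" using int by simp
    also have "\<dots> = (\<integral>x. h x \<bullet> b \<partial>M)" using comp[OF b] by simp
    also have "\<dots> = (\<integral>x. h x \<partial>M) \<bullet> b" using hi by simp
    finally show "(\<integral>y. f y \<partial>(M \<bind> K)) \<bullet> b = (\<integral>x. \<integral>y. f y \<partial>K x \<partial>M) \<bullet> b" by (simp add: h_def)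
  qed
qed




lemma integral_blinear:
  assumes "bounded_linear T" "integrable M f"
  shows "(\<integral>x. T (f x) \<partial>M) = T (\<integral>x. f x \<partial>M)"
  using has_bochner_integral_bounded_linear[OF assms(1) has_bochner_integral_integrable[OF assms(2)]]
  by (rule has_bochner_integral_integral_eq)

lemma bounded_bilinear_outer: "bounded_bilinear (outer :: real^'a \<Rightarrow> real^'b \<Rightarrow> real^'b^'a)"
  by (rule bilinear_conv_bounded_bilinear[THEN iffD1])
     (auto simp: bilinear_def outer_def vec_eq_iff algebra_simps intro!: linearI)

lemma outer_add_left: "outer (a + b) c = outer a c + outer b c"
  by (simp add: outer_def vec_eq_iff algebra_simps)
lemma outer_add_right: "outer c (a + b) = outer c a + outer c b"
  by (simp add: outer_def vec_eq_iff algebra_simps)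
lemma outer_diff_left: "outer (a - b) c = outer a c - outer b c"
  by (simp add: outer_def vec_eq_iff algebra_simps)
lemma outer_diff_right: "outer c (a - b) = outer c a - outer c b"
  by (simp add: outer_def vec_eq_iff algebra_simps)
lemma outer_zero_left[simp]: "outer 0 c = 0"
  by (simp add: outer_def vec_eq_iff)
lemma outer_scaleR_left: "outer (r *\<^sub>R a) c = r *\<^sub>R outer a c"
  by (simp add: outer_def vec_eq_iff algebra_simps)
lemma outer_scaleR_right: "outer c (r *\<^sub>R a) = r *\<^sub>R outer c a"
  by (simp add: outer_def vec_eq_iff algebra_simps)
lemma transpose_outer: "transpose (outer a b) = outer b a"
  by (simp add: outer_def transpose_def vec_eq_iff)

lemma outer_mv: "outer ((M::real^'a^'b) *v x) ((N::real^'c^'d) *v y) = M ** outer x y ** transpose N"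
  by (simp add: outer_def matrix_matrix_mult_def matrix_vector_mult_def transpose_def vec_eq_iff
      sum_distrib_left sum_distrib_right ac_simps)

lemma continuous_on_outer[continuous_intros]:
  "continuous_on S f \<Longrightarrow> continuous_on S g \<Longrightarrow> continuous_on S (\<lambda>x. outer (f x :: real^'a) (g x :: real^'b))"
  by (rule bounded_bilinear.continuous_on[OF bounded_bilinear_outer])

lemma norm_outer_le: "norm (outer (a::real^'a) (b::real^'b)) \<le> real CARD('a) * real CARD('b) * (norm a * norm b)"
proof -
  have "norm (outer a b) \<le> (\<Sum>i\<in>UNIV. \<Sum>j\<in>UNIV. \<bar>outer a b $ i $ j\<bar>)" by (rule norm_vec_le_entries)
  also have "\<dots> \<le> (\<Sum>i\<in>(UNIV::'a set). \<Sum>j\<in>(UNIV::'b set). norm a * norm b)"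
  proof (intro sum_mono)
    fix i j
    have "\<bar>outer a b $ i $ j\<bar> = \<bar>a $ i\<bar> * \<bar>b $ j\<bar>" by (simp add: outer_def abs_mult)
    also have "\<dots> \<le> norm a * norm b" by (intro mult_mono component_le_norm_cart) auto
    finally show "\<bar>outer a b $ i $ j\<bar> \<le> norm a * norm b" .
  qed
  finally show ?thesis by simp
qed

lemma transpose_diff: "transpose (A - B :: real^'a^'b) = transpose A - transpose B"
  by (simp add: transpose_def vec_eq_iff)

lemma transpose_add: "transpose (A + B :: real^'a^'b) = transpose A + transpose B"
  by (simp add: transpose_def vec_eq_iff)

lemma mexp_shift_minus: "mexp (t *\<^sub>R (A - c *\<^sub>R mat 1)) = exp (- (t * c)) *\<^sub>R mexp (t *\<^sub>R A)"
  using mexp_shift[of t A "- c"] by (simp add: algebra_simps)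

lemma ibp_exp:
  fixes H H' :: "real \<Rightarrow> 'v::banach"
  assumes mu: "mu \<noteq> 0" and D: "0 \<le> D" and H0: "H 0 = 0"
    and Hd: "\<And>t. t \<in> {0..D} \<Longrightarrow> (H has_vector_derivative H' t) (at t within {0..D})"
    and Hc: "continuous_on {0..D} H'"
  shows "integral {0..D} (\<lambda>t. exp (- mu * t) *\<^sub>R H t) =
         (1 / mu) *\<^sub>R (integral {0..D} (\<lambda>t. exp (- mu * t) *\<^sub>R H' t) - exp (- mu * D) *\<^sub>R H D)"
proof -
  have Hcc: "continuous_on {0..D} H" by (rule continuous_on_vector_derivative[OF Hd])
  have i1: "(\<lambda>t. exp (- mu * t) *\<^sub>R H' t) integrable_on {0..D}"
    by (intro integrable_continuous_real continuous_intros Hc)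
  have i2: "(\<lambda>t. (- mu * exp (- mu * t)) *\<^sub>R H t) integrable_on {0..D}"
    by (intro integrable_continuous_real continuous_intros Hcc)
  have "integral {0..D} (\<lambda>t. exp (- mu * t) *\<^sub>R H' t + (- mu * exp (- mu * t)) *\<^sub>R H t)
        = exp (- mu * D) *\<^sub>R H D - exp (- mu * 0) *\<^sub>R H 0"
  proof (rule ftc_int[OF D])
    fix s assume s: "s \<in> {0..D}"
    have e: "((\<lambda>s. exp (- mu * s)) has_real_derivative (- mu * exp (- mu * s))) (at s within {0..D})"
      by (auto intro!: derivative_eq_intros)
    show "((\<lambda>t. exp (- mu * t) *\<^sub>R H t) has_vector_derivative exp (- mu * s) *\<^sub>R H' s + (- mu * exp (- mu * s)) *\<^sub>R H s) (at s within {0..D})"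
      by (rule has_vector_derivative_scaleR[OF e Hd[OF s]])
  qed
  moreover have "integral {0..D} (\<lambda>t. exp (- mu * t) *\<^sub>R H' t + (- mu * exp (- mu * t)) *\<^sub>R H t)
      = integral {0..D} (\<lambda>t. exp (- mu * t) *\<^sub>R H' t) + integral {0..D} (\<lambda>t. (- mu * exp (- mu * t)) *\<^sub>R H t)"
    by (rule Henstock_Kurzweil_Integration.integral_add[OF i1 i2])
  moreover have "integral {0..D} (\<lambda>t. (- mu * exp (- mu * t)) *\<^sub>R H t) = (- mu) *\<^sub>R integral {0..D} (\<lambda>t. exp (- mu * t) *\<^sub>R H t)"
    by (simp only: scaleR_scaleR[symmetric] integral_cmul)
  ultimately have "integral {0..D} (\<lambda>t. exp (- mu * t) *\<^sub>R H' t) - mu *\<^sub>R integral {0..D} (\<lambda>t. exp (- mu * t) *\<^sub>R H t)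
        = exp (- mu * D) *\<^sub>R H D"
    using H0 by simp
  then have "mu *\<^sub>R integral {0..D} (\<lambda>t. exp (- mu * t) *\<^sub>R H t) = integral {0..D} (\<lambda>t. exp (- mu * t) *\<^sub>R H' t) - exp (- mu * D) *\<^sub>R H D"
    by (simp add: algebra_simps)
  then have "(1 / mu) *\<^sub>R (mu *\<^sub>R integral {0..D} (\<lambda>t. exp (- mu * t) *\<^sub>R H t)) = (1 / mu) *\<^sub>R (integral {0..D} (\<lambda>t. exp (- mu * t) *\<^sub>R H' t) - exp (- mu * D) *\<^sub>R H D)"
    by simp
  then show ?thesis using mu by simp
qed


definition tr :: "real^'a^'a \<Rightarrow> real" where "tr A = (\<Sum>i\<in>UNIV. A $ i $ i)"

lemma bounded_linear_tr: "bounded_linear tr"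
  by (rule linear_conv_bounded_linear[THEN iffD1]) (auto intro!: linearI simp: tr_def sum.distrib sum_distrib_left)

lemma norm_sq_tr: "norm (x::real^'a) ^ 2 = tr (outer x x)"
  by (simp add: power2_norm_eq_inner inner_vec_def tr_def outer_def)

lemma continuous_on_tr[continuous_intros]: "continuous_on S f \<Longrightarrow> continuous_on S (\<lambda>x. tr (f x))"
  by (rule bounded_linear.continuous_on[OF bounded_linear_tr])

lemma outer_expand: "outer (x - z) (x - z) = outer (x - m) (x - m) + outer (x - m) (m - z) + outer (m - z) (x - m) + outer (m - z) (m - z)"
  by (simp add: outer_def vec_eq_iff algebra_simps)

lemma moment_integrable:
  fixes N :: "(real^'n) measure"
  assumes fin: "finite_measure N" and sets: "sets N = sets borel"
    and i2: "integrable N (\<lambda>x. norm x ^ 2)"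
  shows "integrable N (\<lambda>x. x)" "integrable N (\<lambda>x. outer (x - a) (x - b))"
proof -
  have idm: "(\<lambda>x. x) \<in> borel_measurable N" using sets by (simp add: measurable_cong_sets[OF sets refl])
  have ic: "integrable N (\<lambda>x. 1 + norm x ^ 2)" by (intro Bochner_Integration.integrable_add finite_measure.integrable_const[OF fin] i2)
  show ix: "integrable N (\<lambda>x. x)"
  proof (rule Bochner_Integration.integrable_bound[OF ic idm], intro AE_I2)
    fix x :: "real^'n"
    have "norm x \<le> 1 + norm x ^ 2"
    proof (cases "norm x \<le> 1")
      case True then show ?thesis using zero_le_power2[of "norm x"] by linarith
    next
      case False
      then have "norm x * 1 \<le> norm x * norm x" by (intro mult_left_mono) auto
      then show ?thesis by (simp add: power2_eq_square)
    qed
    then show "norm x \<le> norm (1 + norm x ^ 2)" by simp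
  qed
  have "(\<lambda>x. outer x x) \<in> borel_measurable borel"
    by (intro borel_measurable_continuous_onI continuous_intros)
  then have om: "(\<lambda>x. outer x x) \<in> borel_measurable N" by (simp add: measurable_cong_sets[OF sets refl])
  have ixx: "integrable N (\<lambda>x. outer x x)"
  proof (rule Bochner_Integration.integrable_bound[OF integrable_mult_right[OF i2, of "real CARD('n) * real CARD('n)"] om])
    show "AE x in N. norm (outer x x) \<le> norm (real CARD('n) * real CARD('n) * norm x ^ 2)"
      using norm_outer_le[of x x for x] by (intro AE_I2) (simp add: power2_eq_square)
  qed
  have blL: "bounded_linear (\<lambda>v. outer v b)" by (rule bounded_bilinear.bounded_linear_left[OF bounded_bilinear_outer])
  have blR: "bounded_linear (\<lambda>v. outer a v)" by (rule bounded_bilinear.bounded_linear_right[OF bounded_bilinear_outer])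
  have "outer (x - a) (x - b) = outer x x - outer x b - outer a x + outer a b" for x
    by (simp add: outer_diff_left outer_diff_right)
  moreover have "integrable N (\<lambda>x. outer x x - outer x b - outer a x + outer a b)"
    by (intro Bochner_Integration.integrable_add Bochner_Integration.integrable_diff ixx
        integrable_bounded_linear[OF blL ix] integrable_bounded_linear[OF blR ix] finite_measure.integrable_const[OF fin])
  ultimately show "integrable N (\<lambda>x. outer (x - a) (x - b))" by simp
qed


lemma moment_formula:
  fixes N :: "(real^'n) measure"
  assumes prob: "prob_space N" and sets: "sets N = sets borel"
    and i2: "integrable N (\<lambda>x. norm x ^ 2)"
    and mean: "(\<integral>x. x \<partial>N) = mv" and cov: "(\<integral>x. outer (x - mv) (x - mv) \<partial>N) = S"
  shows "(\<integral>x. outer (x - z) (x - z) \<partial>N) = S + outer (mv - z) (mv - z)"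
    and "(\<integral>x. norm x ^ 2 \<partial>N) = tr (S + outer mv mv)"
proof -
  have fin: "finite_measure N" using prob by (rule prob_space.finite_measure)
  note MI = moment_integrable[OF fin sets i2]
  have ic: "integrable N (\<lambda>x. c)" for c :: "'c::{banach,second_countable_topology}"
    by (rule finite_measure.integrable_const[OF fin])
  have idm: "integrable N (\<lambda>x. x - mv)" by (intro Bochner_Integration.integrable_diff MI(1) ic)
  have z0: "(\<integral>x. x - mv \<partial>N) = 0"
  proof -
    have "(\<integral>x. x - mv \<partial>N) = (\<integral>x. x \<partial>N) - (\<integral>x. mv \<partial>N)"
      by (rule Bochner_Integration.integral_diff[OF MI(1) ic])
    then show ?thesis using mean prob_space.prob_space[OF prob] by simp
  qed
  have Zg: "(\<integral>x. outer (x - z) (x - z) \<partial>N) = S + outer (mv - z) (mv - z)" for z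
  proof -
  have blL: "bounded_linear (\<lambda>v. outer v (mv - z))" by (rule bounded_bilinear.bounded_linear_left[OF bounded_bilinear_outer])
  have blR: "bounded_linear (\<lambda>v. outer (mv - z) v)" by (rule bounded_bilinear.bounded_linear_right[OF bounded_bilinear_outer])
  have a1: "integrable N (\<lambda>x. outer (x - mv) (x - mv))" by (rule MI(2))
  have a2: "integrable N (\<lambda>x. outer (x - mv) (mv - z))" by (rule integrable_bounded_linear[OF blL idm])
  have a3: "integrable N (\<lambda>x. outer (mv - z) (x - mv))" by (rule integrable_bounded_linear[OF blR idm])
  have b2: "(\<integral>x. outer (x - mv) (mv - z) \<partial>N) = 0" using integral_blinear[OF blL idm] z0 by simp
  have b3: "(\<integral>x. outer (mv - z) (x - mv) \<partial>N) = 0" using integral_blinear[OF blR idm] z0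
    by (simp add: outer_def vec_eq_iff)
  have b4: "(\<integral>x. outer (mv - z) (mv - z) \<partial>N) = outer (mv - z) (mv - z)"
    using prob_space.prob_space[OF prob] by simp
  have "(\<integral>x. outer (x - z) (x - z) \<partial>N)
      = (\<integral>x. outer (x - mv) (x - mv) + outer (x - mv) (mv - z) + outer (mv - z) (x - mv) + outer (mv - z) (mv - z) \<partial>N)"
    by (rule Bochner_Integration.integral_cong[OF refl]) (rule outer_expand)
  also have "\<dots> = (\<integral>x. outer (x - mv) (x - mv) + outer (x - mv) (mv - z) + outer (mv - z) (x - mv) \<partial>N) + (\<integral>x. outer (mv - z) (mv - z) \<partial>N)"
    by (intro Bochner_Integration.integral_add Bochner_Integration.integrable_add a1 a2 a3 ic)
  also have "(\<integral>x. outer (x - mv) (x - mv) + outer (x - mv) (mv - z) + outer (mv - z) (x - mv) \<partial>N)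
      = (\<integral>x. outer (x - mv) (x - mv) + outer (x - mv) (mv - z) \<partial>N) + (\<integral>x. outer (mv - z) (x - mv) \<partial>N)"
    by (intro Bochner_Integration.integral_add Bochner_Integration.integrable_add a1 a2 a3)
  also have "(\<integral>x. outer (x - mv) (x - mv) + outer (x - mv) (mv - z) \<partial>N)
      = (\<integral>x. outer (x - mv) (x - mv) \<partial>N) + (\<integral>x. outer (x - mv) (mv - z) \<partial>N)"
    by (intro Bochner_Integration.integral_add a1 a2)
  finally show ?thesis
    using b2 b3 b4 cov by simp
  qed
  then show "(\<integral>x. outer (x - z) (x - z) \<partial>N) = S + outer (mv - z) (mv - z)" .
  have "(\<integral>x. norm x ^ 2 \<partial>N) = (\<integral>x. tr (outer (x - 0) (x - 0)) \<partial>N)" by (simp add: norm_sq_tr)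
  also have "\<dots> = tr (\<integral>x. outer (x - 0) (x - 0) \<partial>N)"
    by (rule integral_blinear[OF bounded_linear_tr MI(2)])
  also have "\<dots> = tr (S + outer mv mv)" using Zg[of 0] by simp
  finally show "(\<integral>x. norm x ^ 2 \<partial>N) = tr (S + outer mv mv)" .
qed




lemma continuous_on_indef_gen[continuous_intros]:
  fixes g :: "real \<Rightarrow> 'v::banach"
  shows "continuous_on UNIV g \<Longrightarrow> continuous_on S (\<lambda>t. integral {0..t} g)"
  by (rule continuous_on_subset[OF continuous_indef_integral]) auto

theorem proposition1:
  fixes A :: "real^'n^'n" and u :: "real^'n" and L :: "real^'b^'n"
    and Q :: "real^'b^'b" and xa :: "real^'n" and Pa :: "real^'n^'n"
    and mu \<Delta> :: real
    and K :: "real \<Rightarrow> (real^'n) measure"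
  assumes mu_pos: "mu > 0" and Delta_pos: "\<Delta> > 0"
    and Q_cov: "cov_matrix Q" and Pa_cov: "cov_matrix Pa"
  defines "m \<equiv> (\<lambda>t. mexp (t *\<^sub>R A) *v xa + integral {0..t} (\<lambda>\<tau>. mexp (\<tau> *\<^sub>R A)) *v u)"
    and "C \<equiv> (\<lambda>t. mexp (t *\<^sub>R A) ** Pa ** mexp (t *\<^sub>R transpose A)
              + integral {0..t} (\<lambda>\<tau>. mexp (\<tau> *\<^sub>R A) ** L ** Q ** transpose L ** mexp (\<tau> *\<^sub>R transpose A)))"
    and "c \<equiv> mu / (1 - exp (- mu * \<Delta>))"
  defines "pk \<equiv> (\<lambda>t::real. c * exp (- mu * t) * indicator {0..<\<Delta>} t)"
  defines "MT \<equiv> density lborel (\<lambda>t. ennreal (pk t))"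
  assumes K_meas: "K \<in> borel \<rightarrow>\<^sub>M prob_algebra borel"
    and K_int: "\<And>t. t \<in> {0..<\<Delta>} \<Longrightarrow> integrable (K t) (\<lambda>x. norm x ^ 2)"
    and K_mean: "\<And>t. t \<in> {0..<\<Delta>} \<Longrightarrow> (\<integral>x. x \<partial>K t) = m t"
    and K_cov: "\<And>t. t \<in> {0..<\<Delta>} \<Longrightarrow> (\<integral>x. outer (x - m t) (x - m t) \<partial>K t) = C t"
  defines "Mk \<equiv> MT \<bind> K"
    and "xb1 \<equiv> c *\<^sub>R (\<chi> i. mexp (\<Delta> *\<^sub>R Ab_mat A mu xa) $ Some i $ None)"
    and "xb2 \<equiv> c *\<^sub>R (\<chi> i. mexp (\<Delta> *\<^sub>R Abu_mat A mu u) $ Some (Some i) $ None)"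
  defines "xb \<equiv> xb1 + xb2"
    and "Am \<equiv> A - (mu / 2) *\<^sub>R mat 1"
    and "Cb \<equiv> L ** Q ** transpose L + mu *\<^sub>R Pa"
  defines "EC \<equiv> - (exp (- mu * \<Delta>) / (1 - exp (- mu * \<Delta>))) *\<^sub>R
               integral {0..\<Delta>} (\<lambda>\<tau>. mexp (\<tau> *\<^sub>R A) ** L ** Q ** transpose L ** mexp (\<tau> *\<^sub>R transpose A))
             + (1 / (1 - exp (- mu * \<Delta>))) *\<^sub>R
               integral {0..\<Delta>} (\<lambda>t. mexp (t *\<^sub>R Am) ** Cb ** mexp (t *\<^sub>R transpose Am))"
  defines "Sxx \<equiv> c *\<^sub>R integral {0..\<Delta>} (\<lambda>t. mexp (t *\<^sub>R Am) ** outer xa xa ** mexp (t *\<^sub>R transpose Am))"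
    and "Sxu \<equiv> c *\<^sub>R integral {0..\<Delta>} (\<lambda>t. mexp (t *\<^sub>R (A - mu *\<^sub>R mat 1)) ** outer xa u
               ** integral {0..t} (\<lambda>\<tau>. mexp (\<tau> *\<^sub>R transpose A)))"
    and "Suu1 \<equiv> (exp (- mu * \<Delta>) / (1 - exp (- mu * \<Delta>))) *\<^sub>R
               (integral {0..\<Delta>} (\<lambda>\<tau>. mexp (\<tau> *\<^sub>R A)) ** outer u u
                ** integral {0..\<Delta>} (\<lambda>\<tau>. mexp (\<tau> *\<^sub>R transpose A)))"
    and "Suu2 \<equiv> (1 / (1 - exp (- mu * \<Delta>))) *\<^sub>R integral {0..\<Delta>} (\<lambda>t. mexp (t *\<^sub>R (A - mu *\<^sub>R mat 1))
               ** outer u u ** integral {0..t} (\<lambda>\<tau>. mexp (\<tau> *\<^sub>R transpose A)))"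
  defines "Suu \<equiv> - Suu1 + Suu2 + transpose Suu2"
  defines "Cm \<equiv> Sxx + Sxu + transpose Sxu + Suu - outer xb xb"
  shows "(\<integral>t. m t \<partial>MT) = xb
    \<and> (\<integral>x. x \<partial>Mk) = xb
    \<and> (\<integral>t. C t \<partial>MT) = EC
    \<and> (\<integral>t. outer (m t - xb) (m t - xb) \<partial>MT) = Cm
    \<and> (\<integral>x. outer (x - xb) (x - xb) \<partial>Mk) = Cm + EC"
proof -
  have den: "0 < 1 - exp (- mu * \<Delta>)" using mu_pos Delta_pos by simp
  have c_eq: "c = mu / (1 - exp (- mu * \<Delta>))" by (simp add: c_def)
  have cpos: "c > 0" using den mu_pos by (simp add: c_eq)
  have pk_eq: "pk = (\<lambda>t. c * exp (- mu * t) * indicator {0..<\<Delta>} t)" by (simp add: pk_def)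
  have MT_eq: "MT = density lborel (\<lambda>t. ennreal (pk t))" by (simp add: MT_def)
  note MTI = MT_integral[OF mu_pos Delta_pos _ c_eq pk_eq, folded MT_eq]
  have MTP: "prob_space MT" using MT_prob[OF mu_pos Delta_pos c_eq pk_eq] by (simp add: MT_eq)
  define E where "E t = mexp (t *\<^sub>R A)" for t
  define F where "F t = integral {0..t} (\<lambda>\<tau>. mexp (\<tau> *\<^sub>R A))" for t
  have m_eq: "m t = E t *v xa + F t *v u" for t by (simp add: m_def E_def F_def)
  have cm: "continuous_on UNIV m" unfolding m_def by (intro continuous_intros)
  have cC: "continuous_on UNIV C" unfolding C_def by (intro continuous_intros)

  have P1: "(\<integral>t. m t \<partial>MT) = xb"
  proof -
    have e1: "exp (- mu * t) *\<^sub>R m t = mexp (t *\<^sub>R (A - mu *\<^sub>R mat 1)) *v xa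
        + exp (- mu * t) *\<^sub>R (integral {0..t} (\<lambda>\<tau>. mexp (\<tau> *\<^sub>R A)) *v u)" for t
      by (simp add: m_def mexp_shift_minus scaleR_right_distrib scaleR_matrix_vector_assoc mult.commute)
    have "integral {0..\<Delta>} (\<lambda>t. exp (- mu * t) *\<^sub>R m t)
       = integral {0..\<Delta>} (\<lambda>t. mexp (t *\<^sub>R (A - mu *\<^sub>R mat 1)) *v xa)
        + integral {0..\<Delta>} (\<lambda>t. exp (- mu * t) *\<^sub>R (integral {0..t} (\<lambda>\<tau>. mexp (\<tau> *\<^sub>R A)) *v u))"
      unfolding e1
      by (intro Henstock_Kurzweil_Integration.integral_add integrable_continuous_real continuous_intros)
    also have "\<dots> = (\<chi> i. mexp (\<Delta> *\<^sub>R Ab_mat A mu xa) $ Some i $ None)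
                   + (\<chi> i. mexp (\<Delta> *\<^sub>R Abu_mat A mu u) $ Some (Some i) $ None)"
      using Ab_column[of \<Delta> A mu xa] Abu_column[OF mu_pos, of \<Delta> A u] Delta_pos by simp
    finally show ?thesis
      using MTI(2)[OF cm] by (simp add: xb_def xb1_def xb2_def scaleR_right_distrib)
  qed

  define Et where "Et t = mexp (t *\<^sub>R transpose A)" for t
  define GG where "GG \<tau> = mexp (\<tau> *\<^sub>R A) ** L ** Q ** transpose L ** mexp (\<tau> *\<^sub>R transpose A)" for \<tau>
  define Qi where "Qi t = integral {0..t} GG" for t
  have C_eq: "C t = E t ** Pa ** Et t + Qi t" for t by (simp add: C_def E_def Et_def Qi_def GG_def[abs_def])
  have GGc: "continuous_on S GG" for S unfolding GG_def by (intro continuous_intros)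
  have Am_exp: "mexp (t *\<^sub>R Am) = exp (- (t * (mu / 2))) *\<^sub>R E t" for t
    by (simp add: Am_def E_def mexp_shift_minus)
  have AmT_exp: "mexp (t *\<^sub>R transpose Am) = exp (- (t * (mu / 2))) *\<^sub>R Et t" for t
    by (simp add: Am_def Et_def transpose_diff transpose_scalar mexp_shift_minus)
  have ee: "exp (- (t * (mu / 2))) * exp (- (t * (mu / 2))) = exp (- mu * t)" for t
    by (simp add: exp_add[symmetric])
  have Cb_split: "mexp (t *\<^sub>R Am) ** Cb ** mexp (t *\<^sub>R transpose Am)
      = exp (- mu * t) *\<^sub>R GG t + mu *\<^sub>R (exp (- mu * t) *\<^sub>R (E t ** Pa ** Et t))" for t
  proof -
    have "mexp (t *\<^sub>R Am) ** Cb ** mexp (t *\<^sub>R transpose Am)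
        = (exp (- (t * (mu / 2))) * exp (- (t * (mu / 2)))) *\<^sub>R (E t ** Cb ** Et t)"
      by (simp add: Am_exp AmT_exp matrix_scalar_ac scalar_matrix_assoc[symmetric])
    also have "\<dots> = exp (- mu * t) *\<^sub>R (E t ** Cb ** Et t)" by (simp only: ee)
    also have "E t ** Cb ** Et t = GG t + mu *\<^sub>R (E t ** Pa ** Et t)"
      by (simp add: Cb_def GG_def E_def Et_def matrix_add_ldistrib matrix_add_rdistrib' matrix_mul_assoc
          matrix_scalar_ac scalar_matrix_assoc[symmetric])
    finally show ?thesis by (simp add: scaleR_add_right)
  qed
  have P2: "(\<integral>t. C t \<partial>MT) = EC"
  proof -
    have iP: "(\<lambda>t. exp (- mu * t) *\<^sub>R (E t ** Pa ** Et t)) integrable_on {0..\<Delta>}"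
      unfolding E_def Et_def by (intro integrable_continuous_real continuous_intros)
    have iQ: "(\<lambda>t. exp (- mu * t) *\<^sub>R Qi t) integrable_on {0..\<Delta>}"
      unfolding Qi_def by (intro integrable_continuous_real continuous_intros GGc)
    have iG: "(\<lambda>t. exp (- mu * t) *\<^sub>R GG t) integrable_on {0..\<Delta>}"
      by (intro integrable_continuous_real continuous_intros GGc)
    define IP where "IP = integral {0..\<Delta>} (\<lambda>t. exp (- mu * t) *\<^sub>R (E t ** Pa ** Et t))"
    define IG where "IG = integral {0..\<Delta>} (\<lambda>t. exp (- mu * t) *\<^sub>R GG t)"
    have "integral {0..\<Delta>} (\<lambda>t. exp (- mu * t) *\<^sub>R C t) = IP + integral {0..\<Delta>} (\<lambda>t. exp (- mu * t) *\<^sub>R Qi t)"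
      unfolding C_eq scaleR_add_right IP_def by (rule Henstock_Kurzweil_Integration.integral_add[OF iP iQ])
    also have "integral {0..\<Delta>} (\<lambda>t. exp (- mu * t) *\<^sub>R Qi t) = (1 / mu) *\<^sub>R (IG - exp (- mu * \<Delta>) *\<^sub>R Qi \<Delta>)"
      unfolding IG_def
    proof (rule ibp_exp)
      show "mu \<noteq> 0" "0 \<le> \<Delta>" using mu_pos Delta_pos by auto
      show "Qi 0 = 0" by (simp add: Qi_def)
      show "continuous_on {0..\<Delta>} GG" by (rule GGc)
      fix t assume "t \<in> {0..\<Delta>}"
      then show "(Qi has_vector_derivative GG t) (at t within {0..\<Delta>})"
        unfolding Qi_def[abs_def] by (rule integral_has_vector_derivative[OF GGc])
    qed
    finally have I2: "integral {0..\<Delta>} (\<lambda>t. exp (- mu * t) *\<^sub>R C t) = IP + (1 / mu) *\<^sub>R (IG - exp (- mu * \<Delta>) *\<^sub>R Qi \<Delta>)" .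
    have "integral {0..\<Delta>} (\<lambda>t. mexp (t *\<^sub>R Am) ** Cb ** mexp (t *\<^sub>R transpose Am)) = IG + mu *\<^sub>R IP"
    proof -
      have iP2: "(\<lambda>t. mu *\<^sub>R (exp (- mu * t) *\<^sub>R (E t ** Pa ** Et t))) integrable_on {0..\<Delta>}"
        by (rule integrable_cmul[OF iP])
      show ?thesis
        by (simp only: Cb_split Henstock_Kurzweil_Integration.integral_add[OF iG iP2] integral_cmul IG_def IP_def)
    qed
    then have EC_eq: "EC = - (exp (- mu * \<Delta>) / (1 - exp (- mu * \<Delta>))) *\<^sub>R Qi \<Delta>
        + (1 / (1 - exp (- mu * \<Delta>))) *\<^sub>R (IG + mu *\<^sub>R IP)"
      by (simp add: EC_def Qi_def GG_def[abs_def])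
    have k1: "c * (1 / mu) = 1 / (1 - exp (- mu * \<Delta>))" using mu_pos by (simp add: c_eq)
    have k2: "c * (1 / mu) * exp (- mu * \<Delta>) = exp (- mu * \<Delta>) / (1 - exp (- mu * \<Delta>))" using mu_pos by (simp add: c_eq)
    have k3: "1 / (1 - exp (- mu * \<Delta>)) * mu = c" by (simp add: c_eq)
    have "(\<integral>t. C t \<partial>MT) = c *\<^sub>R (IP + (1 / mu) *\<^sub>R (IG - exp (- mu * \<Delta>) *\<^sub>R Qi \<Delta>))"
      using MTI(2)[OF cC] I2 by simp
    also have "\<dots> = c *\<^sub>R IP + (c * (1 / mu)) *\<^sub>R IG - (c * (1 / mu) * exp (- mu * \<Delta>)) *\<^sub>R Qi \<Delta>"
      by (simp add: scaleR_add_right scaleR_diff_right)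
    also have "\<dots> = EC"
      unfolding EC_eq k1 k2 using c_eq by (simp add: scaleR_add_right k3 algebra_simps mult.commute)
    finally show ?thesis .
  qed

  have Et_tr: "transpose (E t) = Et t" for t by (simp add: E_def Et_def mexp_transpose transpose_scalar)
  have FT: "transpose (F t) = integral {0..t} Et" for t
    unfolding F_def Et_def
    by (subst integral_transpose[symmetric]) (auto intro!: integrable_continuous_real continuous_intros
        simp: mexp_transpose transpose_scalar)
  define X1 where "X1 t = mexp (t *\<^sub>R (A - mu *\<^sub>R mat 1)) ** outer xa u ** integral {0..t} (\<lambda>\<tau>. mexp (\<tau> *\<^sub>R transpose A))" for t
  define Y1 where "Y1 t = mexp (t *\<^sub>R (A - mu *\<^sub>R mat 1)) ** outer u u ** integral {0..t} (\<lambda>\<tau>. mexp (\<tau> *\<^sub>R transpose A))" for t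
  define S1 where "S1 t = mexp (t *\<^sub>R Am) ** outer xa xa ** mexp (t *\<^sub>R transpose Am)" for t
  define H where "H t = outer (F t *v u) (F t *v u)" for t
  have Et_int: "integral {0..t} (\<lambda>\<tau>. mexp (\<tau> *\<^sub>R transpose A)) = integral {0..t} Et" for t
    by (simp add: Et_def[abs_def])
  have eX1: "exp (- mu * t) *\<^sub>R outer (E t *v xa) (F t *v u) = X1 t" for t
    by (simp add: X1_def outer_mv FT Et_int mexp_shift_minus E_def scalar_matrix_assoc mult.commute)
  have eY1: "exp (- mu * t) *\<^sub>R outer (E t *v u) (F t *v u) = Y1 t" for t
    by (simp add: Y1_def outer_mv FT Et_int mexp_shift_minus E_def scalar_matrix_assoc mult.commute)
  have eS1: "exp (- mu * t) *\<^sub>R outer (E t *v xa) (E t *v xa) = S1 t" for t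
  proof -
    have "S1 t = (exp (- (t * (mu / 2))) * exp (- (t * (mu / 2)))) *\<^sub>R (E t ** outer xa xa ** Et t)"
      by (simp add: S1_def Am_exp AmT_exp matrix_scalar_ac scalar_matrix_assoc[symmetric])
    then show ?thesis by (simp only: ee outer_mv Et_tr)
  qed
  have mm_split: "exp (- mu * t) *\<^sub>R outer (m t) (m t) = S1 t + X1 t + transpose (X1 t) + exp (- mu * t) *\<^sub>R H t" for t
  proof -
    have "outer (m t) (m t) = outer (E t *v xa) (E t *v xa) + outer (E t *v xa) (F t *v u)
        + transpose (outer (E t *v xa) (F t *v u)) + H t"
      by (simp add: m_eq H_def outer_add_left outer_add_right transpose_outer)
    then show ?thesis
      by (simp only: scaleR_add_right eS1 eX1 transpose_scalar[symmetric])
  qed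
  have Hd: "(H has_vector_derivative outer (E t *v u) (F t *v u) + outer (F t *v u) (E t *v u)) (at t within {0..\<Delta>})"
    if t: "t \<in> {0..\<Delta>}" for t
  proof -
    have Fd: "((\<lambda>t. F t *v u) has_vector_derivative E t *v u) (at t within {0..\<Delta>})"
      unfolding F_def[abs_def] E_def by (rule bounded_linear.has_vector_derivative[OF bounded_linear_mv_right F_deriv[OF t]])
    from bounded_bilinear.has_vector_derivative[OF bounded_bilinear_outer Fd Fd]
    show ?thesis unfolding H_def by (simp add: add.commute)
  qed
  have IH: "integral {0..\<Delta>} (\<lambda>t. exp (- mu * t) *\<^sub>R H t) =
      (1 / mu) *\<^sub>R (integral {0..\<Delta>} (\<lambda>t. Y1 t + transpose (Y1 t)) - exp (- mu * \<Delta>) *\<^sub>R H \<Delta>)"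
  proof -
    define H' where "H' t = outer (E t *v u) (F t *v u) + outer (F t *v u) (E t *v u)" for t
    have H'c: "continuous_on {0..\<Delta>} H'"
      unfolding H'_def E_def F_def by (intro continuous_intros)
    have H0: "H 0 = 0" by (simp add: H_def F_def)
    have "integral {0..\<Delta>} (\<lambda>t. exp (- mu * t) *\<^sub>R H t) =
      (1 / mu) *\<^sub>R (integral {0..\<Delta>} (\<lambda>t. exp (- mu * t) *\<^sub>R H' t) - exp (- mu * \<Delta>) *\<^sub>R H \<Delta>)"
      using ibp_exp[of mu \<Delta> H H'] mu_pos Delta_pos H0 H'c Hd unfolding H'_def by auto
    moreover have "exp (- mu * t) *\<^sub>R H' t = Y1 t + transpose (Y1 t)" for t
      unfolding H'_def scaleR_add_right eY1[symmetric] transpose_scalar transpose_outer ..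
    ultimately show ?thesis by simp
  qed
  have HD: "H \<Delta> = integral {0..\<Delta>} (\<lambda>\<tau>. mexp (\<tau> *\<^sub>R A)) ** outer u u ** integral {0..\<Delta>} (\<lambda>\<tau>. mexp (\<tau> *\<^sub>R transpose A))"
    unfolding H_def outer_mv FT Et_int by (simp add: F_def)
  have iS1: "S1 integrable_on {0..\<Delta>}" unfolding S1_def by (intro integrable_continuous_real continuous_intros)
  have iX1: "X1 integrable_on {0..\<Delta>}" unfolding X1_def by (intro integrable_continuous_real continuous_intros)
  have iY1: "Y1 integrable_on {0..\<Delta>}" unfolding Y1_def by (intro integrable_continuous_real continuous_intros)
  have iXT: "(\<lambda>t. transpose (X1 t)) integrable_on {0..\<Delta>}" unfolding X1_def by (intro integrable_continuous_real continuous_intros)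
  have iYT: "(\<lambda>t. transpose (Y1 t)) integrable_on {0..\<Delta>}" unfolding Y1_def by (intro integrable_continuous_real continuous_intros)
  have iH: "(\<lambda>t. exp (- mu * t) *\<^sub>R H t) integrable_on {0..\<Delta>}" unfolding H_def F_def by (intro integrable_continuous_real continuous_intros)
  have Imm: "integral {0..\<Delta>} (\<lambda>t. exp (- mu * t) *\<^sub>R outer (m t) (m t)) =
     integral {0..\<Delta>} S1 + integral {0..\<Delta>} X1 + transpose (integral {0..\<Delta>} X1)
     + (1 / mu) *\<^sub>R (integral {0..\<Delta>} Y1 + transpose (integral {0..\<Delta>} Y1) - exp (- mu * \<Delta>) *\<^sub>R H \<Delta>)"
  proof -
    have IH': "integral {0..\<Delta>} (\<lambda>t. exp (- mu * t) *\<^sub>R H t) =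
      (1 / mu) *\<^sub>R (integral {0..\<Delta>} Y1 + transpose (integral {0..\<Delta>} Y1) - exp (- mu * \<Delta>) *\<^sub>R H \<Delta>)"
      unfolding IH Henstock_Kurzweil_Integration.integral_add[OF iY1 iYT] integral_transpose[OF iY1] ..
    have "integral {0..\<Delta>} (\<lambda>t. S1 t + X1 t + transpose (X1 t) + exp (- mu * t) *\<^sub>R H t)
      = integral {0..\<Delta>} S1 + integral {0..\<Delta>} X1 + integral {0..\<Delta>} (\<lambda>t. transpose (X1 t)) + integral {0..\<Delta>} (\<lambda>t. exp (- mu * t) *\<^sub>R H t)"
      using iS1 iX1 iXT iH
      by (simp add: Henstock_Kurzweil_Integration.integral_add Henstock_Kurzweil_Integration.integrable_add del: integral_transpose)
    then show ?thesis unfolding mm_split IH' integral_transpose[OF iX1] by simp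
  qed
  have cmm: "continuous_on UNIV (\<lambda>t. outer (m t) (m t))" using cm by (intro continuous_intros)
  have P3a: "(\<integral>t. outer (m t) (m t) \<partial>MT) = Sxx + Sxu + transpose Sxu + Suu"
  proof -
    have k1: "c * (1 / mu) = 1 / (1 - exp (- mu * \<Delta>))" using mu_pos by (simp add: c_eq)
    have k2: "c * (1 / mu) * exp (- mu * \<Delta>) = exp (- mu * \<Delta>) / (1 - exp (- mu * \<Delta>))" using mu_pos by (simp add: c_eq)
    have "(\<integral>t. outer (m t) (m t) \<partial>MT) = c *\<^sub>R integral {0..\<Delta>} (\<lambda>t. exp (- mu * t) *\<^sub>R outer (m t) (m t))"
      by (rule MTI(2)[OF cmm])
    also have "\<dots> = c *\<^sub>R integral {0..\<Delta>} S1 + c *\<^sub>R integral {0..\<Delta>} X1 + transpose (c *\<^sub>R integral {0..\<Delta>} X1)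
       + (c * (1 / mu)) *\<^sub>R integral {0..\<Delta>} Y1 + transpose ((c * (1 / mu)) *\<^sub>R integral {0..\<Delta>} Y1)
       - (c * (1 / mu) * exp (- mu * \<Delta>)) *\<^sub>R H \<Delta>"
      unfolding Imm by (simp add: scaleR_add_right scaleR_diff_right transpose_scalar)
    also have "\<dots> = Sxx + Sxu + transpose Sxu + Suu"
      unfolding k1 k2 HD
      by (simp add: Sxx_def Sxu_def Suu_def Suu1_def Suu2_def S1_def[abs_def] X1_def[abs_def] Y1_def[abs_def])
    finally show ?thesis .
  qed


  have im: "integrable MT m" by (rule MTI(1)[OF cm])
  have imm: "integrable MT (\<lambda>t. outer (m t) (m t))" by (rule MTI(1)[OF cmm])
  have blL: "bounded_linear (\<lambda>v. outer v xb)" by (rule bounded_bilinear.bounded_linear_left[OF bounded_bilinear_outer])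
  have blR: "bounded_linear (\<lambda>v. outer xb v)" by (rule bounded_bilinear.bounded_linear_right[OF bounded_bilinear_outer])
  have i1: "integrable MT (\<lambda>t. outer (m t) xb)" by (rule integrable_bounded_linear[OF blL im])
  have i2: "integrable MT (\<lambda>t. outer xb (m t))" by (rule integrable_bounded_linear[OF blR im])
  have j1: "(\<integral>t. outer (m t) xb \<partial>MT) = outer xb xb" using integral_blinear[OF blL im] P1 by simp
  have j2: "(\<integral>t. outer xb (m t) \<partial>MT) = outer xb xb" using integral_blinear[OF blR im] P1 by simp
  have j3: "(\<integral>t. outer xb xb \<partial>MT) = outer xb xb" using prob_space.prob_space[OF MTP] by simp
  have P3: "(\<integral>t. outer (m t - xb) (m t - xb) \<partial>MT) = Cm"
  proof -
    have "outer (m t - xb) (m t - xb) = outer (m t) (m t) - outer (m t) xb - outer xb (m t) + outer xb xb" for t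
      by (simp add: outer_diff_left outer_diff_right)
    moreover have ic: "integrable MT (\<lambda>t. outer xb xb)"
      by (rule finite_measure.integrable_const[OF prob_space.finite_measure[OF MTP]])
    ultimately have "(\<integral>t. outer (m t - xb) (m t - xb) \<partial>MT)
        = (\<integral>t. outer (m t) (m t) - outer (m t) xb - outer xb (m t) \<partial>MT) + (\<integral>t. outer xb xb \<partial>MT)"
      using imm i1 i2 by (simp only:) (rule Bochner_Integration.integral_add, auto)
    also have "(\<integral>t. outer (m t) (m t) - outer (m t) xb - outer xb (m t) \<partial>MT)
        = (\<integral>t. outer (m t) (m t) - outer (m t) xb \<partial>MT) - (\<integral>t. outer xb (m t) \<partial>MT)"
      using imm i1 i2 by (rule_tac Bochner_Integration.integral_diff, auto)
    also have "(\<integral>t. outer (m t) (m t) - outer (m t) xb \<partial>MT)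
        = (\<integral>t. outer (m t) (m t) \<partial>MT) - (\<integral>t. outer (m t) xb \<partial>MT)"
      using imm i1 by (rule Bochner_Integration.integral_diff)
    finally have "(\<integral>t. outer (m t - xb) (m t - xb) \<partial>MT)
        = (\<integral>t. outer (m t) (m t) \<partial>MT) - (\<integral>t. outer (m t) xb \<partial>MT) - (\<integral>t. outer xb (m t) \<partial>MT) + (\<integral>t. outer xb xb \<partial>MT)" .
    then show ?thesis using j1 j2 j3 P3a by (simp add: Cm_def)
  qed

  have Kspace: "K t \<in> space (prob_algebra borel)" for t using measurable_space[OF K_meas, of t] by simp
  then have Kprob: "prob_space (K t)" and Ksets: "sets (K t) = sets borel" for t
    by (auto simp: space_prob_algebra)
  have sets_MT: "sets MT = sets borel" by (simp add: MT_eq)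
  have space_MT: "space MT = UNIV" by (simp add: MT_eq)
  have MT_pa: "MT \<in> space (prob_algebra borel)" using MTP sets_MT by (simp add: space_prob_algebra)
  have K_sub: "K \<in> MT \<rightarrow>\<^sub>M subprob_algebra borel"
    using measurable_prob_algebraD[OF K_meas] by (simp add: measurable_cong_sets[OF sets_MT refl])
  have MT_ne: "space MT \<noteq> {}" by (simp add: space_MT)
  have sets_Mk: "sets Mk = sets borel" unfolding Mk_def by (rule sets_bind'[OF MT_pa K_meas])
  have MkP: "prob_space Mk" unfolding Mk_def by (rule prob_space_bind'[OF MT_pa K_meas])
  have AE_MT: "AE t in MT. t \<in> {0..<\<Delta>}"
  proof -
    have pkm: "(\<lambda>t. ennreal (pk t)) \<in> borel_measurable lborel" unfolding pk_eq by measurable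
    have ae0: "AE t in lborel. 0 < ennreal (pk t) \<longrightarrow> t \<in> {0..<\<Delta>}" by (intro AE_I2) (auto simp: pk_eq indicator_def split: if_splits)
    show ?thesis unfolding MT_eq by (subst AE_density[OF pkm]) (rule ae0)
  qed
  define q where "q t = tr (C t + outer (m t) (m t))" for t
  have cq: "continuous_on UNIV q" unfolding q_def using cC cm by (intro continuous_intros)
  have Kmom: "(\<integral>x. outer (x - z) (x - z) \<partial>K t) = C t + outer (m t - z) (m t - z) \<and> (\<integral>x. norm x ^ 2 \<partial>K t) = q t"
    if t: "t \<in> {0..<\<Delta>}" for t z
    using moment_formula[OF Kprob[of t] Ksets[of t] K_int[OF t] K_mean[OF t] K_cov[OF t]] by (simp add: q_def)
  have nnMk: "(\<integral>\<^sup>+x. ennreal (norm x ^ 2) \<partial>Mk) = ennreal (\<integral>t. q t \<partial>MT)"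
  proof -
    have "(\<integral>\<^sup>+x. ennreal (norm x ^ 2) \<partial>Mk) = (\<integral>\<^sup>+t. \<integral>\<^sup>+x. ennreal (norm x ^ 2) \<partial>K t \<partial>MT)"
      unfolding Mk_def by (rule nn_integral_bind[OF _ K_sub]) measurable
    also have "\<dots> = (\<integral>\<^sup>+t. ennreal (q t) \<partial>MT)"
    proof (rule nn_integral_cong_AE)
      show "AE t in MT. (\<integral>\<^sup>+x. ennreal (norm x ^ 2) \<partial>K t) = ennreal (q t)"
        using AE_MT
      proof eventually_elim
        case (elim t)
        then show ?case using nn_integral_eq_integral[OF K_int[OF elim]] Kmom[OF elim] by simp
      qed
    qed
    also have "\<dots> = ennreal (\<integral>t. q t \<partial>MT)"
    proof (rule nn_integral_eq_integral[OF MTI(1)[OF cq]])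
      show "AE t in MT. 0 \<le> q t"
        using AE_MT
      proof eventually_elim
        case (elim t)
        have "0 \<le> (\<integral>x. norm x ^ 2 \<partial>K t)" by (rule Bochner_Integration.integral_nonneg) simp
        then show ?case using Kmom[OF elim, of 0] by simp
      qed
    qed
    finally show ?thesis .
  qed
  have iMk2: "integrable Mk (\<lambda>x. norm x ^ 2)"
  proof -
    have "(\<lambda>x. norm x ^ 2) \<in> borel_measurable Mk"
      by (simp add: measurable_cong_sets[OF sets_Mk refl])
    then show ?thesis using nnMk by (simp add: integrable_iff_bounded)
  qed
  note MkI = moment_integrable[OF prob_space.finite_measure[OF MkP] sets_Mk iMk2]
  have idm: "(\<lambda>x. x) \<in> borel_measurable (borel :: (real^'n) measure)" by simp
  have mm: "m \<in> borel_measurable MT"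
    using cm by (simp add: measurable_cong_sets[OF sets_MT refl] borel_measurable_continuous_onI)
  have P4: "(\<integral>x. x \<partial>Mk) = xb"
  proof -
    have "(\<integral>x. x \<partial>Mk) = (\<integral>t. (\<integral>x. x \<partial>K t) \<partial>MT)"
      using bind_integral_vec[OF K_sub MT_ne idm] MkI(1) unfolding Mk_def by simp
    also have "\<dots> = (\<integral>t. m t \<partial>MT)"
    proof (rule integral_cong_AE)
      show "(\<lambda>t. \<integral>x. x \<partial>K t) \<in> borel_measurable MT"
        by (rule measurable_compose[OF K_sub integral_measurable_subprob_algebra[OF idm]])
      show "m \<in> borel_measurable MT" by (rule mm)
      show "AE t in MT. (\<integral>x. x \<partial>K t) = m t" using AE_MT by eventually_elim (rule K_mean)
    qed
    finally show ?thesis using P1 by simp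
  qed
  have P5: "(\<integral>x. outer (x - xb) (x - xb) \<partial>Mk) = Cm + EC"
  proof -
    have om: "(\<lambda>x. outer (x - xb) (x - xb)) \<in> borel_measurable (borel :: (real^'n) measure)"
      by (intro borel_measurable_continuous_onI continuous_intros)
    have "(\<integral>x. outer (x - xb) (x - xb) \<partial>Mk) = (\<integral>t. (\<integral>x. outer (x - xb) (x - xb) \<partial>K t) \<partial>MT)"
      using bind_integral_vec[OF K_sub MT_ne om] MkI(2) unfolding Mk_def by simp
    also have "\<dots> = (\<integral>t. C t + outer (m t - xb) (m t - xb) \<partial>MT)"
    proof (rule integral_cong_AE)
      show "(\<lambda>t. \<integral>x. outer (x - xb) (x - xb) \<partial>K t) \<in> borel_measurable MT"
        by (rule measurable_compose[OF K_sub integral_measurable_subprob_algebra[OF om]])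
      have "continuous_on UNIV (\<lambda>t. C t + outer (m t - xb) (m t - xb))" using cC cm by (intro continuous_intros)
      then show "(\<lambda>t. C t + outer (m t - xb) (m t - xb)) \<in> borel_measurable MT"
        by (simp add: measurable_cong_sets[OF sets_MT refl] borel_measurable_continuous_onI)
      show "AE t in MT. (\<integral>x. outer (x - xb) (x - xb) \<partial>K t) = C t + outer (m t - xb) (m t - xb)"
        using AE_MT
      proof eventually_elim
        case (elim t)
        show ?case using Kmom[OF elim, of xb] by simp
      qed
    qed
    also have "\<dots> = (\<integral>t. C t \<partial>MT) + (\<integral>t. outer (m t - xb) (m t - xb) \<partial>MT)"
    proof (rule Bochner_Integration.integral_add)
      show "integrable MT C" by (rule MTI(1)[OF cC])
      have "continuous_on UNIV (\<lambda>t. outer (m t - xb) (m t - xb))" using cm by (intro continuous_intros)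
      then show "integrable MT (\<lambda>t. outer (m t - xb) (m t - xb))" by (rule MTI(1))
    qed
    finally show ?thesis using P2 P3 by (simp add: add.commute)
  qed
  show ?thesis using P1 P4 P2 P3 P5 by blast
qed


end
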